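(* Fix an equation $(f,q,w)$ as in the context and let $\xi:=\arctan(-1/f_0)+\pi$ if $f_0>0$ and $\xi:=\arctan(-1/f_0)$ if $f_0<0$ (so $\xi\in(0,\pi)$). For $\alpha\in[0,\pi)$, $\beta\in(0,\pi]$ let $\mathbf S_{\alpha,\beta}$ be the separated self-adjoint boundary condition $\cos\alpha\,y_0-\sin\alpha\,f_0\Delta y_0=0$, $\cos\beta\,y_N-\sin\beta\,f_N\Delta y_N=0$, and write $\lambda_n(\alpha,\beta)$ for the $n$-th eigenvalue of the problem with this boundary condition. Then the problem with $\mathbf S_{\alpha,\beta}$ has exactly $N$ eigenvalues if $\alpha\neq\xi$ and $\beta\neq\pi$; exactly $N-1$ eigenvalues if either $\alpha\neq\xi,\ \beta=\pi$ or $\alpha=\xi,\ \beta\neq\pi$; and exactly $N-2$ eigenvalues if $\alpha=\xi$ and $\beta=\pi$. Moreover, for any $0\le\alpha_1<\alpha_2<\xi\le\alpha_3<\alpha_4<\pi$ and $0<\beta_1<\beta_2\le\pi$: (i) for every $\beta_0\in(0,\pi)$: for each $0\le n\le N-2$, $\lambda_n(\alpha_2,\beta_0)<\lambda_n(\alpha_1,\beta_0)<\lambda_n(\alpha_4,\beta_0)<\lambda_n(\alpha_3,\beta_0)<\lambda_{n+1}(\alpha_2,\beta_0)$, and $\lambda_{N-1}(\alpha_2,\beta_0)<\lambda_{N-1}(\alpha_1,\beta_0)<\lambda_{N-1}(\alpha_4,\beta_0)$; in addition $\lambda_{N-1}(\alpha_4,\beta_0)<\lambda_{N-1}(\alpha_3,\beta_0)$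 if $\alpha_3\neq\xi$; (ii) for $\beta_0=\pi$: for each $0\le n\le N-3$, $\lambda_n(\alpha_2,\pi)<\lambda_n(\alpha_1,\pi)<\lambda_n(\alpha_4,\pi)<\lambda_n(\alpha_3,\pi)<\lambda_{n+1}(\alpha_2,\pi)$, and $\lambda_{N-2}(\alpha_2,\pi)<\lambda_{N-2}(\alpha_1,\pi)<\lambda_{N-2}(\alpha_4,\pi)$; in addition $\lambda_{N-2}(\alpha_4,\pi)<\lambda_{N-2}(\alpha_3,\pi)$ if $\alpha_3\neq\xi$; (iii) for every $\alpha_0\in[0,\xi)\cup(\xi,\pi)$: for each $0\le n\le N-2$, $\lambda_n(\alpha_0,\beta_1)<\lambda_n(\alpha_0,\beta_2)<\lambda_{n+1}(\alpha_0,\beta_1)$; in addition $\lambda_{N-1}(\alpha_0,\beta_1)<\lambda_{N-1}(\alpha_0,\beta_2)$ if $\beta_2\neq\pi$; (iv) for $\alpha_0=\xi$: for each $0\le n\le N-3$, $\lambda_n(\xi,\beta_1)<\lambda_n(\xi,\beta_2)<\lambda_{n+1}(\xi,\beta_1)$; in addition $\lambda_{N-2}(\xi,\beta_1)<\lambda_{N-2}(\xi,\beta_2)$ if $\beta_2\neq\pi$.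
   Context: Let $N\ge2$ be an integer. An equation is given by real sequences $f=\{f_n\}_{n=0}^N$, $q=\{q_n\}_{n=1}^N$, $w=\{w_n\}_{n=1}^N$ with $f_n\neq0$ for $0\le n\le N$ and $w_n>0$ for $1\le n\le N$; it is the discrete Sturm–Liouville equation $-\nabla(f_n\Delta y_n)+q_ny_n=\lambda w_ny_n$, $1\le n\le N$, for $y=\{y_n\}_{n=0}^{N+1}$, where $\Delta y_n=y_{n+1}-y_n$, $\nabla y_n=y_n-y_{n-1}$. A boundary condition $[A\,|\,B]$ is $A(y_0,f_0\Delta y_0)^T+B(y_N,f_N\Delta y_N)^T=0$ with complex $2\times2$ matrices $A,B$, $\mathrm{rank}(A,B)=2$; two $2\times4$ matrices $(A,B)$ define the same boundary condition iff they differ by left multiplication by an invertible complex $2\times2$ matrix. It is self-adjoint if $AJA^*=BJB^*$, $J=\begin{pmatrix}0&1\\-1&0\end{pmatrix}$. $\lambda\in\mathbb C$ is an eigenvalue of the problem (equation plus boundary condition) if there is a nontrivial solution. For self-adjoint boundary conditions all eigenvalues are real and finitely many; the multiplicity of an eigenvalue is the dimension of its solution space (it equals its multiplicity as a zero of the characteristic polynomial). The eigenvalues counted with multiplicity number $k$ with $N-2\le k\le N$ ("exactly $k$ eigenvalues") and are ordered $\lambda_0\le\lambda_1\le\cdots\le\lambda_{k-1}$; $\lambda_n$ is the $n$-th eigenvalue. *)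

theory Defs
  imports "HOL-Analysis.Analysis" "HOL-Library.Function_Algebras"
begin

text \<open>Sequences y = (y_0,...,y_{N+1}) are represented as functions nat => complex
  that vanish beyond index N+1.  Coefficients f (indices 0..N), q, w (indices 1..N) are
  real functions on nat; values outside the index ranges are irrelevant.\<close>

definition fwd_diff :: "(nat \<Rightarrow> complex) \<Rightarrow> nat \<Rightarrow> complex" where
  "fwd_diff y n = y (Suc n) - y n"

definition sl_eq ::
  "(nat \<Rightarrow> real) \<Rightarrow> (nat \<Rightarrow> real) \<Rightarrow> (nat \<Rightarrow> real) \<Rightarrow> nat \<Rightarrow> complex \<Rightarrow> (nat \<Rightarrow> complex) \<Rightarrow> bool" where
  "sl_eq f q w N lam y \<longleftrightarrow>
     (\<forall>n\<in>{1..N}.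
        - (of_real (f n) * fwd_diff y n - of_real (f (n - 1)) * fwd_diff y (n - 1))
        + of_real (q n) * y n = lam * of_real (w n) * y n)"

text \<open>Boundary condition [A|B]: A (y_0, f_0 Delta y_0)^T + B (y_N, f_N Delta y_N)^T = 0.\<close>
definition sl_bc ::
  "(nat \<Rightarrow> real) \<Rightarrow> nat \<Rightarrow> complex^2^2 \<Rightarrow> complex^2^2 \<Rightarrow> (nat \<Rightarrow> complex) \<Rightarrow> bool" where
  "sl_bc f N A B y \<longleftrightarrow>
     (\<forall>i::2. A$i$1 * y 0 + A$i$2 * (of_real (f 0) * fwd_diff y 0)
            + B$i$1 * y N + B$i$2 * (of_real (f N) * fwd_diff y N) = 0)"

definition sl_solutions ::
  "(nat \<Rightarrow> real) \<Rightarrow> (nat \<Rightarrow> real) \<Rightarrow> (nat \<Rightarrow> real) \<Rightarrow> nat \<Rightarrow> complex^2^2 \<Rightarrow> complex^2^2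
    \<Rightarrow> complex \<Rightarrow> (nat \<Rightarrow> complex) set" where
  "sl_solutions f q w N A B lam =
     {y. (\<forall>n>N+1. y n = 0) \<and> sl_eq f q w N lam y \<and> sl_bc f N A B y}"

definition sl_is_eigenvalue ::
  "(nat \<Rightarrow> real) \<Rightarrow> (nat \<Rightarrow> real) \<Rightarrow> (nat \<Rightarrow> real) \<Rightarrow> nat \<Rightarrow> complex^2^2 \<Rightarrow> complex^2^2
    \<Rightarrow> complex \<Rightarrow> bool" where
  "sl_is_eigenvalue f q w N A B lam \<longleftrightarrow> (\<exists>y\<in>sl_solutions f q w N A B lam. y \<noteq> 0)"

definition sl_mult ::
  "(nat \<Rightarrow> real) \<Rightarrow> (nat \<Rightarrow> real) \<Rightarrow> (nat \<Rightarrow> real) \<Rightarrow> nat \<Rightarrow> complex^2^2 \<Rightarrow> complex^2^2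
    \<Rightarrow> complex \<Rightarrow> nat" where
  "sl_mult f q w N A B lam =
     vector_space.dim (\<lambda>(c::complex) (y::nat \<Rightarrow> complex). (\<lambda>n. c * y n))
       (sl_solutions f q w N A B lam)"

definition sl_num_eigenvalues_is ::
  "(nat \<Rightarrow> real) \<Rightarrow> (nat \<Rightarrow> real) \<Rightarrow> (nat \<Rightarrow> real) \<Rightarrow> nat \<Rightarrow> complex^2^2 \<Rightarrow> complex^2^2
    \<Rightarrow> nat \<Rightarrow> bool" where
  "sl_num_eigenvalues_is f q w N A B k \<longleftrightarrow>
     finite {lam. sl_is_eigenvalue f q w N A B lam} \<and>
     (\<Sum>lam\<in>{lam. sl_is_eigenvalue f q w N A B lam}. sl_mult f q w N A B lam) = k"

text \<open>The n-th eigenvalue: n-th entry (from 0) of the nondecreasing list of the (real)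
  eigenvalues, each repeated according to its multiplicity.  (For self-adjoint boundary
  conditions all eigenvalues are real.)\<close>
definition sl_eig ::
  "(nat \<Rightarrow> real) \<Rightarrow> (nat \<Rightarrow> real) \<Rightarrow> (nat \<Rightarrow> real) \<Rightarrow> nat \<Rightarrow> complex^2^2 \<Rightarrow> complex^2^2
    \<Rightarrow> nat \<Rightarrow> real" where
  "sl_eig f q w N A B n =
     concat (map (\<lambda>x. replicate (sl_mult f q w N A B (of_real x)) x)
       (sorted_list_of_set {x::real. sl_is_eigenvalue f q w N A B (of_real x)})) ! n"

text \<open>Separated boundary condition S_{alpha,beta}:
  cos alpha y_0 - sin alpha f_0 Delta y_0 = 0, cos beta y_N - sin beta f_N Delta y_N = 0.\<close>
definition S_A :: "real \<Rightarrow> complex^2^2" where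
  "S_A \<alpha> = (\<chi> i j. if i = 1 then (if j = 1 then of_real (cos \<alpha>) else - of_real (sin \<alpha>)) else 0)"

definition S_B :: "real \<Rightarrow> complex^2^2" where
  "S_B \<beta> = (\<chi> i j. if i = 2 then (if j = 1 then of_real (cos \<beta>) else - of_real (sin \<beta>)) else 0)"

definition xi_of :: "real \<Rightarrow> real" where
  "xi_of f0 = (if f0 > 0 then arctan (-1 / f0) + pi else arctan (-1 / f0))"

end

theory Submission
  imports Defs "HOL-Computational_Algebra.Fundamental_Theorem_Algebra"
begin


locale slp =
  fixes f q w :: "nat \<Rightarrow> real" and N :: nat
  assumes N2: "N \<ge> 2"
    and f_nz: "\<And>n. n \<le> N \<Longrightarrow> f n \<noteq> 0"
    and w_pos: "\<And>n. 1 \<le> n \<Longrightarrow> n \<le> N \<Longrightarrow> w n > 0"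
begin

fun sol :: "'a::real_field \<Rightarrow> 'a \<Rightarrow> 'a \<Rightarrow> nat \<Rightarrow> 'a \<times> 'a" where
  "sol l a b 0 = (a, b)"
| "sol l a b (Suc n) =
    (let y = fst (sol l a b n) + snd (sol l a b n) / of_real (f n)
     in (y, snd (sol l a b n) + (of_real (q (Suc n)) - l * of_real (w (Suc n))) * y))"

definition sy :: "'a::real_field \<Rightarrow> 'a \<Rightarrow> 'a \<Rightarrow> nat \<Rightarrow> 'a" where
  "sy l a b n = fst (sol l a b n)"
definition sQ :: "'a::real_field \<Rightarrow> 'a \<Rightarrow> 'a \<Rightarrow> nat \<Rightarrow> 'a" where
  "sQ l a b n = snd (sol l a b n)"

lemma sy0[simp]: "sy l a b 0 = a" and sQ0[simp]: "sQ l a b 0 = b"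
  by (simp_all add: sy_def sQ_def)

lemma sySuc: "sy l a b (Suc n) = sy l a b n + sQ l a b n / of_real (f n)"
  by (simp add: sy_def sQ_def Let_def)

lemma sQSuc: "sQ l a b (Suc n) = sQ l a b n + (of_real (q (Suc n)) - l * of_real (w (Suc n))) * sy l a b (Suc n)"
  by (simp add: sy_def sQ_def Let_def)

lemma green:
  "sy l a1 b1 n * sQ m a2 b2 n - sy m a2 b2 n * sQ l a1 b1 n
   = (a1 * b2 - a2 * b1) + (l - m) * (\<Sum>k\<in>{1..n}. of_real (w k) * sy l a1 b1 k * sy m a2 b2 k)"
proof (induction n)
  case 0 then show ?case by simp
next
  case (Suc n)
  have e: "sy l a1 b1 (Suc n) * sQ m a2 b2 n - sy m a2 b2 (Suc n) * sQ l a1 b1 n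
      = sy l a1 b1 n * sQ m a2 b2 n - sy m a2 b2 n * sQ l a1 b1 n"
    by (simp add: sySuc algebra_simps divide_inverse)
  have "sy l a1 b1 (Suc n) * sQ m a2 b2 (Suc n) - sy m a2 b2 (Suc n) * sQ l a1 b1 (Suc n)
     = (sy l a1 b1 (Suc n) * sQ m a2 b2 n - sy m a2 b2 (Suc n) * sQ l a1 b1 n)
       + (l - m) * (of_real (w (Suc n)) * sy l a1 b1 (Suc n) * sy m a2 b2 (Suc n))"
    by (simp only: sQSuc) (simp add: algebra_simps)
  also have "\<dots> = (a1 * b2 - a2 * b1) + (l - m) * (\<Sum>k\<in>{1..n}. of_real (w k) * sy l a1 b1 k * sy m a2 b2 k)
       + (l - m) * (of_real (w (Suc n)) * sy l a1 b1 (Suc n) * sy m a2 b2 (Suc n))"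
    using e Suc.IH by simp
  also have "\<dots> = (a1 * b2 - a2 * b1) + (l - m) * ((\<Sum>k\<in>{1..n}. of_real (w k) * sy l a1 b1 k * sy m a2 b2 k)
       + of_real (w (Suc n)) * sy l a1 b1 (Suc n) * sy m a2 b2 (Suc n))"
    by (simp add: algebra_simps)
  also have "(\<Sum>k\<in>{1..n}. of_real (w k) * sy l a1 b1 k * sy m a2 b2 k)
       + of_real (w (Suc n)) * sy l a1 b1 (Suc n) * sy m a2 b2 (Suc n)
     = (\<Sum>k\<in>{1..Suc n}. of_real (w k) * sy l a1 b1 k * sy m a2 b2 k)"
    by (simp add: sum.cl_ivl_Suc)
  finally show ?case .
qed

lemma lin:
  "sy l a b n = a * sy l 1 0 n + b * sy l 0 1 n \<and> sQ l a b n = a * sQ l 1 0 n + b * sQ l 0 1 n"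
proof (induction n)
  case 0 then show ?case by simp
next
  case (Suc n)
  have 1: "sy l a b (Suc n) = a * sy l 1 0 (Suc n) + b * sy l 0 1 (Suc n)"
    using Suc by (simp add: sySuc algebra_simps add_divide_distrib)
  then show ?case using Suc by (simp add: sQSuc algebra_simps)
qed

lemma back_zero:
  assumes "sy l a b m = 0" "sQ l a b m = 0" shows "a = 0 \<and> b = 0"
  using assms
proof (induction m)
  case 0 then show ?case by simp
next
  case (Suc m)
  have "sQ l a b m = 0" using Suc.prems by (simp add: sQSuc)
  moreover then have "sy l a b m = 0" using Suc.prems by (simp add: sySuc)
  ultimately show ?case using Suc.IH by simp
qed

lemma sol_cnj:
  "sy (cnj l) (cnj a) (cnj b) n = cnj (sy l a b n) \<and> sQ (cnj l) (cnj a) (cnj b) n = cnj (sQ l a b n)"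
  by (induction n) (simp_all add: sySuc sQSuc)

lemma sol_of_real:
  "sy (of_real l :: 'a::real_field) (of_real a) (of_real b) n = of_real (sy l a b n) \<and>
   sQ (of_real l :: 'a) (of_real a) (of_real b) n = of_real (sQ l a b n)"
  by (induction n) (simp_all add: sySuc sQSuc)

end



abbreviation mp :: "real poly \<Rightarrow> 'a::real_field poly" where
  "mp p \<equiv> map_poly of_real p"

lemma mp_add: "mp (p + r) = (mp p + mp r :: 'a::real_field poly)"
  by (rule poly_eqI) (simp add: coeff_map_poly)

lemma mp_mult: "mp (p * r) = (mp p * mp r :: 'a::real_field poly)"
  by (rule poly_eqI) (simp add: coeff_map_poly coeff_mult of_real_sum)

lemma mp_smult: "mp (smult c p) = (smult (of_real c) (mp p) :: 'a::real_field poly)"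
  by (rule map_poly_smult) auto

lemma mp_pCons: "mp (pCons c p) = (pCons (of_real c) (mp p) :: 'a::real_field poly)"
  by (rule map_poly_pCons) auto

lemma mp_real: "(mp p :: real poly) = p"
  by (rule poly_eqI) (simp add: coeff_map_poly)

lemma mp_diff: "mp (p - r) = (mp p - mp r :: 'a::real_field poly)"
  by (rule poly_eqI) (simp add: coeff_map_poly)

lemma poly_mp_of_real: "poly (mp p) (of_real x) = (of_real (poly p x) :: 'a::real_field)"
  by (induction p) (auto simp: mp_pCons)

lemma pderiv_mp: "pderiv (mp p) = (mp (pderiv p) :: 'a::real_field poly)"
  by (rule poly_eqI) (simp add: coeff_map_poly coeff_pderiv)

lemma degree_mp: "degree (mp p :: 'a::real_field poly) = degree p"
  by (rule degree_map_poly) auto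

context slp
begin

fun PP :: "real \<Rightarrow> real \<Rightarrow> nat \<Rightarrow> real poly \<times> real poly" where
  "PP a b 0 = ([:a:], [:b:])"
| "PP a b (Suc n) =
    (let y = fst (PP a b n) + smult (1 / f n) (snd (PP a b n))
     in (y, snd (PP a b n) + [:q (Suc n), - w (Suc n):] * y))"

definition PY where "PY a b n = fst (PP a b n)"
definition PQ where "PQ a b n = snd (PP a b n)"

lemma PY0[simp]: "PY a b 0 = [:a:]" and PQ0[simp]: "PQ a b 0 = [:b:]"
  by (simp_all add: PY_def PQ_def)

lemma PYSuc: "PY a b (Suc n) = PY a b n + smult (1 / f n) (PQ a b n)"
  by (simp add: PY_def PQ_def Let_def)

lemma PQSuc: "PQ a b (Suc n) = PQ a b n + [:q (Suc n), - w (Suc n):] * PY a b (Suc n)"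
  by (simp add: PY_def PQ_def Let_def)

lemma link:
  "sy (l::'a::real_field) (of_real a) (of_real b) n = poly (mp (PY a b n)) l \<and>
   sQ l (of_real a) (of_real b) n = poly (mp (PQ a b n)) l"
proof (induction n)
  case 0 then show ?case by (simp add: mp_pCons)
next
  case (Suc n)
  have 1: "sy l (of_real a) (of_real b) (Suc n) = poly (mp (PY a b (Suc n))) l"
    using Suc by (simp add: sySuc PYSuc mp_add mp_smult divide_inverse of_real_inverse mult.commute)
  have "sQ l (of_real a) (of_real b) (Suc n) = poly (mp (PQ a b (Suc n))) l"
    apply (simp only: sQSuc PQSuc mp_add mp_mult mp_pCons map_poly_0)
    using Suc 1 by (simp add: algebra_simps)
  with 1 show ?case by simp
qed

lemma link_real_y: "sy (x::real) a b n = poly (PY a b n) x"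
  using link[of x a b n] by (simp add: mp_real)
lemma link_real_Q: "sQ (x::real) a b n = poly (PQ a b n) x"
  using link[of x a b n] by (simp add: mp_real)

lemma PP_lin:
  "PY a b n = smult a (PY 1 0 n) + smult b (PY 0 1 n) \<and>
   PQ a b n = smult a (PQ 1 0 n) + smult b (PQ 0 1 n)"
proof -
  have "poly (PY a b n) = poly (smult a (PY 1 0 n) + smult b (PY 0 1 n))"
    "poly (PQ a b n) = poly (smult a (PQ 1 0 n) + smult b (PQ 0 1 n))"
    using lin[of _ a b n] by (auto simp: fun_eq_iff link_real_y[symmetric] link_real_Q[symmetric])
  then show ?thesis by (simp add: poly_eq_poly_eq_iff)
qed

lemma stepY:
  fixes Qp Y :: "real poly"
  assumes "Qp \<noteq> 0" "Y = 0 \<or> degree Y < degree Qp" "c \<noteq> 0"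
  shows "Y + smult c Qp \<noteq> 0 \<and> degree (Y + smult c Qp) = degree Qp \<and>
         lead_coeff (Y + smult c Qp) = c * lead_coeff Qp"
proof -
  have dS: "degree (smult c Qp) = degree Qp" using assms by simp
  have lS: "lead_coeff (smult c Qp) = c * lead_coeff Qp" by (simp add: lead_coeff_smult)
  have nz: "c * lead_coeff Qp \<noteq> 0" using assms by simp
  have "degree (Y + smult c Qp) = degree Qp \<and> lead_coeff (Y + smult c Qp) = c * lead_coeff Qp"
  proof (cases "Y = 0")
    case True then show ?thesis using dS lS by simp
  next
    case False
    then have "degree Y < degree (smult c Qp)" using assms dS by simp
    then show ?thesis using degree_add_eq_right[of Y "smult c Qp"] lead_coeff_add_le[of Y "smult c Qp"] dS lS
      by simp
  qed
  then show ?thesis using nz by (metis leading_coeff_0_iff)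
qed

lemma stepQ:
  fixes Qp Z :: "real poly"
  assumes "Z \<noteq> 0" "Qp = 0 \<or> degree Qp \<le> degree Z" "(v::real) \<noteq> 0"
  shows "Qp + [:u, - v:] * Z \<noteq> 0 \<and> degree (Qp + [:u, - v:] * Z) = degree Z + 1 \<and>
         lead_coeff (Qp + [:u, - v:] * Z) = - v * lead_coeff Z"
proof -
  define P where "P = [:u, - v:] * Z"
  have d: "degree P = degree Z + 1"
    unfolding P_def by (subst degree_mult_eq) (use assms in auto)
  have lc1: "lead_coeff [:u, - v:] = - v" using assms by simp
  have l: "lead_coeff P = - v * lead_coeff Z" unfolding P_def by (simp only: lead_coeff_mult lc1)
  have nz: "- v * lead_coeff Z \<noteq> 0" using assms by simp
  have "degree Qp < degree P" using assms(2) d by auto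
  then have "degree (Qp + P) = degree Z + 1 \<and> lead_coeff (Qp + P) = - v * lead_coeff Z"
    using degree_add_eq_right[of Qp P] lead_coeff_add_le[of Qp P] d l by simp
  then show ?thesis using nz unfolding P_def[symmetric] by (metis leading_coeff_0_iff)
qed

lemma deg_induct:
  assumes m1: "1 \<le> m" and nz: "PQ a b m \<noteq> 0"
    and dl: "PY a b m = 0 \<or> degree (PY a b m) < degree (PQ a b m)"
  shows "m + k \<le> N \<Longrightarrow> PQ a b (m + k) \<noteq> 0 \<and> degree (PQ a b (m + k)) = degree (PQ a b m) + k \<and>
     (PY a b (m + k) = 0 \<or> degree (PY a b (m + k)) < degree (PQ a b (m + k)))"
proof (induction k)
  case 0 then show ?case using nz dl by simp
next
  case (Suc k)
  let ?n = "m + k"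
  have IH: "PQ a b ?n \<noteq> 0" "degree (PQ a b ?n) = degree (PQ a b m) + k"
    "PY a b ?n = 0 \<or> degree (PY a b ?n) < degree (PQ a b ?n)" using Suc by auto
  have fn: "1 / f ?n \<noteq> 0" using f_nz[of ?n] Suc.prems by auto
  have Y: "PY a b (Suc ?n) \<noteq> 0" "degree (PY a b (Suc ?n)) = degree (PQ a b ?n)"
    using stepY[OF IH(1) IH(3) fn] by (auto simp: PYSuc)
  have wn: "w (Suc ?n) \<noteq> 0" using w_pos[of "Suc ?n"] Suc.prems by auto
  have Q: "PQ a b (Suc ?n) \<noteq> 0" "degree (PQ a b (Suc ?n)) = degree (PY a b (Suc ?n)) + 1"
    using stepQ[OF Y(1) _ wn, of "PQ a b ?n" "q (Suc ?n)"] Y(2) by (auto simp: PQSuc)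
  show ?case using Y Q IH by auto
qed

lemma deg_final:
  assumes m1: "1 \<le> m" "m < N" and nz: "PQ a b m \<noteq> 0"
    and dl: "PY a b m = 0 \<or> degree (PY a b m) < degree (PQ a b m)"
  shows "PY a b N \<noteq> 0 \<and> PQ a b N \<noteq> 0 \<and> degree (PY a b N) = degree (PQ a b m) + (N - 1 - m) \<and>
     degree (PQ a b N) = degree (PY a b N) + 1 \<and> lead_coeff (PQ a b N) = - w N * lead_coeff (PY a b N)"
proof -
  let ?n = "N - 1"
  have e: "?n = m + (N - 1 - m)" "Suc ?n = N" using m1 by auto
  have IH: "PQ a b ?n \<noteq> 0" "degree (PQ a b ?n) = degree (PQ a b m) + (N - 1 - m)"
    "PY a b ?n = 0 \<or> degree (PY a b ?n) < degree (PQ a b ?n)"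
    using deg_induct[OF m1(1) nz dl, of "N - 1 - m"] e m1 by auto
  have fn: "1 / f ?n \<noteq> 0" using f_nz[of ?n] by auto
  have Y: "PY a b N \<noteq> 0" "degree (PY a b N) = degree (PQ a b ?n)"
    using stepY[OF IH(1) IH(3) fn] e(2) PYSuc[of a b ?n] by auto
  have wn: "w N \<noteq> 0" using w_pos[of N] N2 by auto
  have Q: "PQ a b N \<noteq> 0" "degree (PQ a b N) = degree (PY a b N) + 1"
    "lead_coeff (PQ a b N) = - w N * lead_coeff (PY a b N)"
    using stepQ[OF Y(1) _ wn, of "PQ a b ?n" "q N"] Y(2) e(2) PQSuc[of a b ?n] by auto
  show ?thesis using Y Q IH by auto
qed

lemma degU: "PY 1 0 N \<noteq> 0 \<and> PQ 1 0 N \<noteq> 0 \<and> degree (PY 1 0 N) = N - 1 \<and>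
     degree (PQ 1 0 N) = N \<and> lead_coeff (PQ 1 0 N) = - w N * lead_coeff (PY 1 0 N)"
proof -
  have w1: "w 1 \<noteq> 0" using w_pos[of 1] N2 by auto
  have a: "PY 1 0 1 = [:1:]" "PQ 1 0 1 = [:q 1, - w 1:]"
    by (simp_all add: PYSuc[of 1 0 0, simplified] PQSuc[of 1 0 0, simplified])
  have "PQ 1 0 1 \<noteq> 0" "degree (PQ 1 0 1) = 1" using w1 a by auto
  then show ?thesis using deg_final[of 1 1 0] a N2 by auto
qed

lemma degV: "PY (- 1 / f 0) 1 N \<noteq> 0 \<and> PQ (- 1 / f 0) 1 N \<noteq> 0 \<and> degree (PY (- 1 / f 0) 1 N) = N - 2 \<and>
     degree (PQ (- 1 / f 0) 1 N) = N - 1 \<and> lead_coeff (PQ (- 1 / f 0) 1 N) = - w N * lead_coeff (PY (- 1 / f 0) 1 N)"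
proof -
  have a: "PY (- 1 / f 0) 1 1 = 0" "PQ (- 1 / f 0) 1 1 = 1"
    using PYSuc[of "- 1 / f 0" 1 0] PQSuc[of "- 1 / f 0" 1 0]
    by (simp_all add: one_pCons)
  show ?thesis using deg_final[of 1 "- 1 / f 0" 1] a N2 by auto
qed

end



context slp
begin

definition phic :: "real \<Rightarrow> real \<Rightarrow> complex \<Rightarrow> complex" where
  "phic \<alpha> \<beta> z = of_real (cos \<beta>) * sy z (of_real (sin \<alpha>)) (of_real (cos \<alpha>)) N
                 - of_real (sin \<beta>) * sQ z (of_real (sin \<alpha>)) (of_real (cos \<alpha>)) N"

definition phiP :: "real \<Rightarrow> real \<Rightarrow> real poly" where
  "phiP \<alpha> \<beta> = smult (cos \<beta>) (PY (sin \<alpha>) (cos \<alpha>) N) - smult (sin \<beta>) (PQ (sin \<alpha>) (cos \<alpha>) N)"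

lemma phic_poly: "phic \<alpha> \<beta> z = poly (mp (phiP \<alpha> \<beta>)) z"
  by (simp add: phic_def phiP_def link mp_diff mp_smult)

definition uu :: "real \<Rightarrow> complex \<Rightarrow> nat \<Rightarrow> complex" where
  "uu \<alpha> z n = (if n \<le> N + 1 then sy z (of_real (sin \<alpha>)) (of_real (cos \<alpha>)) n else 0)"

lemma uu_nz: "uu \<alpha> z \<noteq> 0"
proof
  assume h: "uu \<alpha> z = 0"
  have "uu \<alpha> z 0 = 0" "uu \<alpha> z 1 = 0" using h by auto
  then have "sin \<alpha> = 0" "sin \<alpha> + cos \<alpha> / f 0 = 0"
    by (auto simp: uu_def sySuc[of _ _ _ 0, simplified])
  then have "cos \<alpha> = 0" using f_nz[of 0] by simp
  with \<open>sin \<alpha> = 0\<close> show False using sin_cos_squared_add[of \<alpha>] by simp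
qed

lemma bc_iff:
  "sl_bc f N (S_A \<alpha>) (S_B \<beta>) y \<longleftrightarrow>
     of_real (cos \<alpha>) * y 0 - of_real (sin \<alpha>) * (of_real (f 0) * fwd_diff y 0) = 0 \<and>
     of_real (cos \<beta>) * y N - of_real (sin \<beta>) * (of_real (f N) * fwd_diff y N) = 0"
  by (simp add: sl_bc_def forall_2 S_A_def S_B_def)

lemma sol_is_multiple:
  assumes y: "y \<in> sl_solutions f q w N (S_A \<alpha>) (S_B \<beta>) z"
  shows "\<exists>c. y = (\<lambda>n. c * uu \<alpha> z n)"
proof -
  let ?a = "of_real (sin \<alpha>) :: complex" and ?b = "of_real (cos \<alpha>) :: complex"
  have supp: "\<forall>n>N+1. y n = 0" and eq: "sl_eq f q w N z y" and bc: "sl_bc f N (S_A \<alpha>) (S_B \<beta>) y"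
    using y by (auto simp: sl_solutions_def)
  define F0 where "F0 = of_real (f 0) * fwd_diff y 0"
  have r1: "?b * y 0 = ?a * F0" using bc by (simp add: bc_iff F0_def)
  define c where "c = ?a * y 0 + ?b * F0"
  have sc: "?a * ?a + ?b * ?b = 1"
    by (metis (no_types) of_real_add of_real_mult of_real_1 sin_cos_squared_add power2_eq_square)
  have y0: "y 0 = c * ?a"
  proof -
    have "c * ?a = ?a * ?a * y 0 + ?a * F0 * ?b" by (simp add: c_def algebra_simps)
    also have "\<dots> = (?a * ?a + ?b * ?b) * y 0" using r1 by (simp add: algebra_simps)
    finally show ?thesis using sc by simp
  qed
  have F0: "F0 = c * ?b"
  proof -
    have "c * ?b = ?a * y 0 * ?b + ?b * ?b * F0" by (simp add: c_def algebra_simps)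
    also have "\<dots> = (?a * ?a + ?b * ?b) * F0" using r1 by (simp add: algebra_simps)
    finally show ?thesis using sc by simp
  qed
  have ind: "n \<le> N \<Longrightarrow> y n = c * sy z ?a ?b n \<and> of_real (f n) * fwd_diff y n = c * sQ z ?a ?b n" for n
  proof (induction n)
    case 0 then show ?case using y0 F0 by (simp add: F0_def mult.commute)
  next
    case (Suc n)
    then have IH: "y n = c * sy z ?a ?b n" "of_real (f n) * fwd_diff y n = c * sQ z ?a ?b n" by auto
    have fn: "(of_real (f n) :: complex) \<noteq> 0" using f_nz[of n] Suc.prems by simp
    have ys: "y (Suc n) = c * sy z ?a ?b (Suc n)"
    proof -
      have "fwd_diff y n = c * sQ z ?a ?b n / of_real (f n)" using IH(2) fn by (simp add: field_simps)
      then show ?thesis using IH(1) by (simp add: fwd_diff_def sySuc algebra_simps)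
    qed
    have "- (of_real (f (Suc n)) * fwd_diff y (Suc n) - of_real (f n) * fwd_diff y n)
        + of_real (q (Suc n)) * y (Suc n) = z * of_real (w (Suc n)) * y (Suc n)"
      using bspec[OF eq[unfolded sl_eq_def], of "Suc n"] Suc.prems by simp
    then have "of_real (f (Suc n)) * fwd_diff y (Suc n) = c * sQ z ?a ?b (Suc n)"
      using IH(2) ys by (simp add: sQSuc algebra_simps)
    then show ?case using ys by simp
  qed
  have yN1: "y (Suc N) = c * sy z ?a ?b (Suc N)"
  proof -
    have fn: "(of_real (f N) :: complex) \<noteq> 0" using f_nz[of N] by simp
    have "fwd_diff y N = c * sQ z ?a ?b N / of_real (f N)" using ind[of N] fn by (simp add: field_simps)
    then show ?thesis using ind[of N] by (simp add: fwd_diff_def sySuc algebra_simps)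
  qed
  have "y = (\<lambda>n. c * uu \<alpha> z n)"
  proof
    fix n show "y n = c * uu \<alpha> z n"
    proof (cases "n \<le> N")
      case True then show ?thesis using ind[of n] by (simp add: uu_def)
    next
      case False
      then show ?thesis using yN1 supp by (cases "n = Suc N") (auto simp: uu_def)
    qed
  qed
  then show ?thesis by blast
qed

lemma multiple_is_sol:
  "(\<lambda>n. c * uu \<alpha> z n) \<in> sl_solutions f q w N (S_A \<alpha>) (S_B \<beta>) z \<longleftrightarrow> c = 0 \<or> phic \<alpha> \<beta> z = 0"
proof -
  let ?a = "of_real (sin \<alpha>) :: complex" and ?b = "of_real (cos \<alpha>) :: complex"
  let ?y = "\<lambda>n. c * uu \<alpha> z n"
  have fd: "n \<le> N \<Longrightarrow> of_real (f n) * fwd_diff ?y n = c * sQ z ?a ?b n" for n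
  proof -
    assume n: "n \<le> N"
    have fn: "(of_real (f n) :: complex) \<noteq> 0" using f_nz[of n] n by simp
    show ?thesis using n fn by (simp add: fwd_diff_def uu_def sySuc algebra_simps)
  qed
  have supp: "\<forall>n>N+1. ?y n = 0" by (simp add: uu_def)
  have eq: "sl_eq f q w N z ?y"
    unfolding sl_eq_def
  proof
    fix n assume n: "n \<in> {1..N}"
    then obtain m where m: "n = Suc m" by (cases n) auto
    show "- (of_real (f n) * fwd_diff ?y n - of_real (f (n - 1)) * fwd_diff ?y (n - 1))
        + of_real (q n) * ?y n = z * of_real (w n) * ?y n"
      using fd[of n] fd[of m] n m by (simp add: uu_def sQSuc algebra_simps)
  qed
  have r1: "?b * ?y 0 - ?a * (of_real (f 0) * fwd_diff ?y 0) = 0"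
    using fd[of 0] by (simp add: uu_def)
  have r2: "of_real (cos \<beta>) * ?y N - of_real (sin \<beta>) * (of_real (f N) * fwd_diff ?y N) = c * phic \<alpha> \<beta> z"
    using fd[of N] by (simp add: uu_def phic_def algebra_simps)
  have "sl_bc f N (S_A \<alpha>) (S_B \<beta>) ?y \<longleftrightarrow> c * phic \<alpha> \<beta> z = 0"
    by (simp only: bc_iff r1 r2) simp
  then show ?thesis using supp eq by (simp add: sl_solutions_def)
qed

lemma eigen_iff: "sl_is_eigenvalue f q w N (S_A \<alpha>) (S_B \<beta>) z \<longleftrightarrow> phic \<alpha> \<beta> z = 0"
proof
  assume "sl_is_eigenvalue f q w N (S_A \<alpha>) (S_B \<beta>) z"
  then obtain y where y: "y \<in> sl_solutions f q w N (S_A \<alpha>) (S_B \<beta>) z" "y \<noteq> 0"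
    by (auto simp: sl_is_eigenvalue_def)
  then obtain c where c: "y = (\<lambda>n. c * uu \<alpha> z n)" using sol_is_multiple by blast
  then have "c \<noteq> 0" using y(2) by auto
  then show "phic \<alpha> \<beta> z = 0" using y(1) c multiple_is_sol by blast
next
  assume "phic \<alpha> \<beta> z = 0"
  then have "(\<lambda>n. 1 * uu \<alpha> z n) \<in> sl_solutions f q w N (S_A \<alpha>) (S_B \<beta>) z"
    using multiple_is_sol by blast
  then show "sl_is_eigenvalue f q w N (S_A \<alpha>) (S_B \<beta>) z"
    using uu_nz[of \<alpha> z] by (auto simp: sl_is_eigenvalue_def)
qed

lemma mult_one:
  assumes "phic \<alpha> \<beta> z = 0"
  shows "sl_mult f q w N (S_A \<alpha>) (S_B \<beta>) z = 1"
proof -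
  interpret V: vector_space "\<lambda>(c::complex) (y::nat \<Rightarrow> complex). (\<lambda>n. c * y n)"
    by unfold_locales (auto simp: fun_eq_iff algebra_simps)
  have S: "sl_solutions f q w N (S_A \<alpha>) (S_B \<beta>) z = V.span {uu \<alpha> z}"
  proof -
    have "sl_solutions f q w N (S_A \<alpha>) (S_B \<beta>) z = range (\<lambda>c. (\<lambda>n. c * uu \<alpha> z n))"
      using sol_is_multiple multiple_is_sol assms by blast
    then show ?thesis by (simp add: V.span_singleton)
  qed
  have "V.independent {uu \<alpha> z}" using uu_nz[of \<alpha> z] by simp
  then show ?thesis unfolding sl_mult_def S
    using V.dim_span_eq_card_independent by simp
qed

lemma two_zero:
  fixes l :: "'a::real_field"
  assumes "sy l a b 1 = 0" "sy l a b 2 = 0" shows "a = 0 \<and> b = 0"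
proof -
  have "sQ l a b 1 / of_real (f 1) = 0" using assms sySuc[of l a b 1] by (simp add: numeral_2_eq_2)
  then have "sQ l a b 1 = 0" using f_nz[of 1] N2 by auto
  then show ?thesis using back_zero[of l a b 1] assms by simp
qed

lemma nsq: "y * cnj y = (complex_of_real (cmod y))^2"
  by (metis complex_norm_square of_real_power)

lemma eig_real:
  assumes "phic \<alpha> \<beta> z = 0" shows "Im z = 0"
proof (rule ccontr)
  assume nr: "Im z \<noteq> 0"
  let ?a = "of_real (sin \<alpha>) :: complex" and ?b = "of_real (cos \<alpha>) :: complex"
  let ?y = "sy z ?a ?b" and ?Q = "sQ z ?a ?b"
  have cj: "sy (cnj z) ?a ?b n = cnj (?y n)" "sQ (cnj z) ?a ?b n = cnj (?Q n)" for n
    using sol_cnj[of z ?a ?b n] by simp_all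
  have g: "?y N * cnj (?Q N) - cnj (?y N) * ?Q N
      = (z - cnj z) * (\<Sum>k\<in>{1..N}. of_real (w k) * ?y k * cnj (?y k))"
    using green[of z ?a ?b N "cnj z" ?a ?b] by (simp add: cj)
  have bcN: "of_real (cos \<beta>) * ?y N = of_real (sin \<beta>) * ?Q N"
    using assms by (simp add: phic_def)
  have lhs0: "?y N * cnj (?Q N) - cnj (?y N) * ?Q N = 0"
  proof (cases "sin \<beta> = 0")
    case True
    then have "cos \<beta> \<noteq> 0" using sin_cos_squared_add[of \<beta>] by auto
    then have "?y N = 0" using bcN True by simp
    then show ?thesis by simp
  next
    case False
    then have "?Q N = of_real (cos \<beta> / sin \<beta>) * ?y N" using bcN by (simp add: field_simps)
    then show ?thesis by simp
  qed
  have zc: "z - cnj z \<noteq> 0" using nr by (simp add: complex_eq_iff)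
  have s0: "(\<Sum>k\<in>{1..N}. of_real (w k) * ?y k * cnj (?y k)) = 0" using g lhs0 zc by simp
  have "(\<Sum>k\<in>{1..N}. of_real (w k) * ?y k * cnj (?y k)) = of_real (\<Sum>k\<in>{1..N}. w k * (cmod (?y k))\<^sup>2)"
    by (simp add: of_real_sum nsq mult.assoc)
  then have s1: "(\<Sum>k\<in>{1..N}. w k * (cmod (?y k))\<^sup>2) = 0" using s0 by (metis of_real_eq_0_iff)
  have "\<forall>k\<in>{1..N}. w k * (cmod (?y k))\<^sup>2 = 0"
  proof -
    have nn: "0 \<le> w k * (cmod (?y k))\<^sup>2" if k: "k \<in> {1..N}" for k
    proof -
      have "0 < w k" using w_pos k by auto
      then show ?thesis by simp
    qed
    show ?thesis using s1 sum_nonneg_eq_0_iff[of "{1..N}", OF _ nn] by simp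
  qed
  note A = this
  have "(1::nat) \<in> {1..N}" "(2::nat) \<in> {1..N}" using N2 by auto
  then have "w 1 * (cmod (?y 1))\<^sup>2 = 0" "w 2 * (cmod (?y 2))\<^sup>2 = 0" using A by blast+
  then have "?y 1 = 0" "?y 2 = 0" using w_pos[of 1] w_pos[of 2] N2 by auto
  then have "?a = 0 \<and> ?b = 0" using two_zero by blast
  then show False using sin_cos_squared_add[of \<alpha>] by simp
qed

end



context slp
begin

definition phir :: "real \<Rightarrow> real \<Rightarrow> real \<Rightarrow> real" where
  "phir \<alpha> \<beta> x = cos \<beta> * sy x (sin \<alpha>) (cos \<alpha>) N - sin \<beta> * sQ x (sin \<alpha>) (cos \<alpha>) N"

lemma phir_poly: "poly (phiP \<alpha> \<beta>) x = phir \<alpha> \<beta> x"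
  by (simp add: phiP_def phir_def link_real_y link_real_Q)

lemma cont_sy: "continuous (at x) (\<lambda>y::real. sy y a b n)"
  by (simp add: link_real_y)
lemma cont_sQ: "continuous (at x) (\<lambda>y::real. sQ y a b n)"
  by (simp add: link_real_Q)

definition Sb :: "real \<Rightarrow> real \<Rightarrow> real \<Rightarrow> real" where
  "Sb \<alpha> x y = (\<Sum>k\<in>{1..N}. w k * sy x (sin \<alpha>) (cos \<alpha>) k * sy y (sin \<alpha>) (cos \<alpha>) k)"

lemma beta_ident:
  "phir \<alpha> \<beta> x * phir \<alpha> \<beta>' y - phir \<alpha> \<beta> y * phir \<alpha> \<beta>' x = sin (\<beta> - \<beta>') * ((x - y) * Sb \<alpha> x y)"
proof -
  let ?a = "sin \<alpha>" and ?b = "cos \<alpha>"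
  have g: "sy x ?a ?b N * sQ y ?a ?b N - sy y ?a ?b N * sQ x ?a ?b N = (x - y) * Sb \<alpha> x y"
    using green[of x ?a ?b N y ?a ?b] by (simp add: Sb_def)
  show ?thesis unfolding phir_def sin_diff g[symmetric] by (simp add: algebra_simps)
qed

lemma pos_sum:
  assumes "g 1 \<noteq> 0 \<or> g 2 \<noteq> 0" shows "(\<Sum>k\<in>{1..N}. w k * g k * g k) > 0"
proof -
  have nn: "\<forall>k\<in>{1..N}. 0 \<le> w k * g k * g k"
  proof
    fix k assume "k \<in> {1..N}" then have "w k > 0" using w_pos by auto
    then show "0 \<le> w k * g k * g k" by (simp add: mult.assoc)
  qed
  have "\<exists>i\<in>{1..N}. g i \<noteq> 0"
  proof (cases "g 1 \<noteq> 0")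
    case True then show ?thesis using N2 by (intro bexI[of _ 1]) auto
  next
    case False then show ?thesis using N2 assms by (intro bexI[of _ 2]) auto
  qed
  then obtain i where i: "i \<in> {1..N}" "g i \<noteq> 0" by blast
  then have "0 < w i * g i * g i" using w_pos[of i] by (auto simp add: mult.assoc zero_less_mult_iff linorder_neq_iff)
  then show ?thesis using sum_pos2[OF _ i(1), of "\<lambda>k. w k * g k * g k"] nn by simp
qed

lemma sc_nz: "\<not> (sin (a::real) = 0 \<and> cos a = 0)"
proof
  assume "sin a = 0 \<and> cos a = 0" then show False using sin_cos_squared_add[of a] by simp
qed

lemma Sb_pos: "Sb \<alpha> x x > 0"
proof -
  have "sy x (sin \<alpha>) (cos \<alpha>) 1 \<noteq> 0 \<or> sy x (sin \<alpha>) (cos \<alpha>) 2 \<noteq> 0"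
    using two_zero[of x "sin \<alpha>" "cos \<alpha>"] sc_nz[of \<alpha>] by auto
  then show ?thesis unfolding Sb_def using pos_sum by blast
qed

lemma Sb_cont: "isCont (Sb \<alpha> x) a"
  unfolding Sb_def by (intro continuous_intros cont_sy)

definition AA :: "real \<Rightarrow> real \<Rightarrow> real" where
  "AA \<beta> x = cos \<beta> * sy x 1 0 N - sin \<beta> * sQ x 1 0 N"
definition BB :: "real \<Rightarrow> real \<Rightarrow> real" where
  "BB \<beta> x = cos \<beta> * sy x 0 1 N - sin \<beta> * sQ x 0 1 N"

lemma phir_AB: "phir \<alpha> \<beta> x = sin \<alpha> * AA \<beta> x + cos \<alpha> * BB \<beta> x"
  using lin[of x "sin \<alpha>" "cos \<alpha>" N] by (simp add: phir_def AA_def BB_def algebra_simps)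

definition vt :: "real \<Rightarrow> real \<Rightarrow> nat \<Rightarrow> real" where
  "vt \<beta> x k = sy x (- BB \<beta> x) (AA \<beta> x) k"

lemma det1: "sy x 1 0 N * sQ x 0 1 N - sy x 0 1 N * sQ (x::real) 1 0 N = 1"
  using green[of x 1 0 N x 0 1] by simp

lemma vt_end: "vt \<beta> x N = sin \<beta> \<and> sQ x (- BB \<beta> x) (AA \<beta> x) N = cos \<beta>"
proof -
  have l: "sy x (- BB \<beta> x) (AA \<beta> x) N = - BB \<beta> x * sy x 1 0 N + AA \<beta> x * sy x 0 1 N"
     "sQ x (- BB \<beta> x) (AA \<beta> x) N = - BB \<beta> x * sQ x 1 0 N + AA \<beta> x * sQ x 0 1 N"
    using lin[of x "- BB \<beta> x" "AA \<beta> x" N] by auto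
  have "vt \<beta> x N = sin \<beta> * (sy x 1 0 N * sQ x 0 1 N - sy x 0 1 N * sQ x 1 0 N)"
    unfolding vt_def l unfolding AA_def BB_def by (simp add: algebra_simps)
  moreover have "sQ x (- BB \<beta> x) (AA \<beta> x) N = cos \<beta> * (sy x 1 0 N * sQ x 0 1 N - sy x 0 1 N * sQ x 1 0 N)"
    unfolding l unfolding AA_def BB_def by (simp add: algebra_simps)
  ultimately show ?thesis using det1[of x] by simp
qed

definition Sa :: "real \<Rightarrow> real \<Rightarrow> real \<Rightarrow> real" where
  "Sa \<beta> x y = (\<Sum>k\<in>{1..N}. w k * vt \<beta> x k * vt \<beta> y k)"

lemma AB_ident: "AA \<beta> x * BB \<beta> y - AA \<beta> y * BB \<beta> x = - ((x - y) * Sa \<beta> x y)"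
proof -
  have g: "vt \<beta> x N * sQ y (- BB \<beta> y) (AA \<beta> y) N - vt \<beta> y N * sQ x (- BB \<beta> x) (AA \<beta> x) N
     = (- BB \<beta> x * AA \<beta> y - (- BB \<beta> y) * AA \<beta> x) + (x - y) * Sa \<beta> x y"
    using green[of x "- BB \<beta> x" "AA \<beta> x" N y "- BB \<beta> y" "AA \<beta> y"] by (simp add: vt_def Sa_def)
  have "vt \<beta> x N * sQ y (- BB \<beta> y) (AA \<beta> y) N - vt \<beta> y N * sQ x (- BB \<beta> x) (AA \<beta> x) N = 0"
    using vt_end[of \<beta> x] vt_end[of \<beta> y] by simp
  then show ?thesis using g by (simp add: algebra_simps)
qed

lemma alpha_ident:
  "phir \<alpha> \<beta> x * phir \<alpha>' \<beta> y - phir \<alpha> \<beta> y * phir \<alpha>' \<beta> x = sin (\<alpha>' - \<alpha>) * ((x - y) * Sa \<beta> x y)"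
proof -
  have "phir \<alpha> \<beta> x * phir \<alpha>' \<beta> y - phir \<alpha> \<beta> y * phir \<alpha>' \<beta> x
      = (sin \<alpha> * cos \<alpha>' - cos \<alpha> * sin \<alpha>') * (AA \<beta> x * BB \<beta> y - AA \<beta> y * BB \<beta> x)"
    unfolding phir_AB by (simp add: algebra_simps)
  also have "\<dots> = sin (\<alpha>' - \<alpha>) * ((x - y) * Sa \<beta> x y)"
    unfolding AB_ident sin_diff by (simp add: algebra_simps)
  finally show ?thesis .
qed

lemma Sa_pos: "Sa \<beta> x x > 0"
proof -
  have "vt \<beta> x (N - 1) \<noteq> 0 \<or> vt \<beta> x N \<noteq> 0"
  proof (rule ccontr)
    assume "\<not> ?thesis"
    then have z: "vt \<beta> x (N - 1) = 0" "vt \<beta> x N = 0" by auto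
    have e: "Suc (N - 1) = N" using N2 by simp
    have "vt \<beta> x N = vt \<beta> x (N - 1) + sQ x (- BB \<beta> x) (AA \<beta> x) (N - 1) / f (N - 1)"
      using sySuc[of x "- BB \<beta> x" "AA \<beta> x" "N - 1"] e by (simp add: vt_def)
    then have "sQ x (- BB \<beta> x) (AA \<beta> x) (N - 1) = 0" using z f_nz[of "N - 1"] by simp
    then have "sQ x (- BB \<beta> x) (AA \<beta> x) N = 0"
      using sQSuc[of x "- BB \<beta> x" "AA \<beta> x" "N - 1"] e z by (simp add: vt_def)
    then show False using vt_end[of \<beta> x] z sin_cos_squared_add[of \<beta>] by simp
  qed
  then have "\<exists>i\<in>{1..N}. vt \<beta> x i \<noteq> 0"
  proof
    assume "vt \<beta> x (N - 1) \<noteq> 0" then show ?thesis using N2 by (intro bexI[of _ "N - 1"]) auto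
  next
    assume "vt \<beta> x N \<noteq> 0" then show ?thesis using N2 by (intro bexI[of _ N]) auto
  qed
  then obtain i where i: "i \<in> {1..N}" "vt \<beta> x i \<noteq> 0" by blast
  have nn: "\<forall>k\<in>{1..N}. 0 \<le> w k * vt \<beta> x k * vt \<beta> x k"
  proof
    fix k assume "k \<in> {1..N}" then have "w k > 0" using w_pos by auto
    then show "0 \<le> w k * vt \<beta> x k * vt \<beta> x k" by (simp add: mult.assoc)
  qed
  have "0 < w i * vt \<beta> x i * vt \<beta> x i" using i w_pos[of i] by (auto simp add: mult.assoc mult_pos_pos zero_less_mult_iff linorder_neq_iff)
  then show ?thesis unfolding Sa_def using sum_pos2[OF _ i(1), of "\<lambda>k. w k * vt \<beta> x k * vt \<beta> x k"] nn by simp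
qed

lemma vt_lin: "vt \<beta> x k = - BB \<beta> x * sy x 1 0 k + AA \<beta> x * sy x 0 1 k"
  using lin[of x "- BB \<beta> x" "AA \<beta> x" k] by (simp add: vt_def)

lemma Sa_cont: "isCont (Sa \<beta> x) a"
  unfolding Sa_def vt_lin AA_def BB_def by (intro continuous_intros cont_sy cont_sQ)

end



lemma pos_trans: "a * b > 0 \<Longrightarrow> b * c > 0 \<Longrightarrow> a * c > (0::real)"
  by (auto simp: zero_less_mult_iff)

lemma local_sign:
  fixes T :: "real \<Rightarrow> real"
  assumes "isCont T a" "T a \<noteq> 0"
  shows "\<exists>d>0. \<forall>y. \<bar>y - a\<bar> < d \<longrightarrow> T y * T a > 0"
proof -
  have "\<forall>r>0. \<exists>s>0. \<forall>x. x \<noteq> a \<and> norm (x - a) < s \<longrightarrow> norm (T x - T a) < r"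
    using assms(1) unfolding isCont_def LIM_eq by blast
  then obtain s where s: "s > 0" "\<forall>x. x \<noteq> a \<and> norm (x - a) < s \<longrightarrow> norm (T x - T a) < \<bar>T a\<bar>"
    using assms(2) by (meson zero_less_abs_iff)
  have "T y * T a > 0" if "\<bar>y - a\<bar> < s" for y
  proof (cases "y = a")
    case True then show ?thesis using assms(2) by (auto simp add: zero_less_mult_iff linorder_neq_iff)
  next
    case False
    then have "\<bar>T y - T a\<bar> < \<bar>T a\<bar>" using s that by auto
    then show ?thesis by (auto simp: zero_less_mult_iff abs_if split: if_splits)
  qed
  then show ?thesis using s(1) by blast
qed

lemma sgn_tail:
  fixes p :: "real poly"
  assumes "p \<noteq> 0" "\<forall>y\<ge>x. poly p y \<noteq> 0"
  shows "poly p x * lead_coeff p > 0"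
proof -
  have "\<exists>M. \<forall>y\<ge>M. poly p y * lead_coeff p > 0"
  proof (cases "lead_coeff p > 0")
    case True
    then obtain M where "\<forall>y\<ge>M. poly p y \<ge> lead_coeff p" using poly_pinfty_gt_lc by blast
    then show ?thesis using True by (intro exI[of _ M]) (auto intro: mult_pos_pos)
  next
    case False
    have "lead_coeff p \<noteq> 0" using assms(1) by simp
    then have "lead_coeff p < 0" using False by linarith
    then have "lead_coeff (- p) > 0" by (simp add: lead_coeff_minus)
    then obtain M where M: "\<forall>y\<ge>M. poly (- p) y \<ge> lead_coeff (- p)" using poly_pinfty_gt_lc by blast
    have "poly p y * lead_coeff p > 0" if "y \<ge> M" for y
    proof -
      have "poly p y \<le> lead_coeff p" using M that by (simp add: lead_coeff_minus)
      then have "poly p y < 0" using \<open>lead_coeff p < 0\<close> by linarith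
      then show ?thesis using \<open>lead_coeff p < 0\<close> by (simp add: mult_neg_neg)
    qed
    then show ?thesis by blast
  qed
  then obtain M where M: "\<forall>y\<ge>M. poly p y * lead_coeff p > 0" by blast
  define M' where "M' = max M (x + 1)"
  have "poly p x * poly p M' > 0"
  proof (rule ccontr)
    assume "\<not> ?thesis"
    moreover have "poly p x \<noteq> 0" "poly p M' \<noteq> 0" using assms(2) by (auto simp: M'_def)
    ultimately have "poly p x * poly p M' < 0" by (auto simp add: linorder_neq_iff zero_less_mult_iff mult_less_0_iff)
    moreover have "x < M'" by (simp add: M'_def)
    ultimately obtain y where "y > x" "y < M'" "poly p y = 0" using poly_IVT[of x M' p] by blast
    then show False using assms(2) by auto
  qed
  moreover have "poly p M' * lead_coeff p > 0" using M by (auto simp: M'_def)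
  ultimately show ?thesis by (rule pos_trans)
qed

locale ilv =
  fixes G H :: "real poly" and T :: "real \<Rightarrow> real \<Rightarrow> real"
  assumes iden: "\<And>x y. poly G x * poly H y - poly G y * poly H x = (x - y) * T x y"
    and Tnz: "\<And>x y. T x x * T y y > 0"
    and Tc: "\<And>x. isCont (T x) x"
    and Gnz: "G \<noteq> 0" and Hnz: "H \<noteq> 0"
begin

lemma Tnz1: "T x x \<noteq> 0" using Tnz[of x x] by auto

lemma disj: assumes "poly G a = 0" shows "poly H a \<noteq> 0"
proof
  assume h: "poly H a = 0"
  obtain d where d: "d > 0" "\<forall>y. \<bar>y - a\<bar> < d \<longrightarrow> T a y * T a a > 0"
    using local_sign[OF Tc Tnz1] by blast
  have 1: "T a (a + d/2) * T a a > 0" using d by auto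
  have "(a - (a + d/2)) * T a (a + d/2) = 0" using iden[of a "a + d/2"] assms h by simp
  then have "T a (a + d/2) = 0" using d by simp
  then show False using 1 by simp
qed

lemma loc:
  obtains d where "d > 0"
    "\<And>y. \<bar>y - a\<bar> < d \<Longrightarrow> poly G a = 0 \<Longrightarrow> poly G y * poly H a * T a a = (y - a) * (T a y * T a a)"
    "\<And>y. \<bar>y - a\<bar> < d \<Longrightarrow> T a y * T a a > 0"
proof -
  obtain d where d: "d > 0" "\<forall>y. \<bar>y - a\<bar> < d \<longrightarrow> T a y * T a a > 0"
    using local_sign[OF Tc Tnz1] by blast
  have "poly G y * poly H a * T a a = (y - a) * (T a y * T a a)" if "poly G a = 0" for y
  proof -
    have "- (poly G y * poly H a) = (a - y) * T a y" using iden[of a y] that by simp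
    then have "poly G y * poly H a = (y - a) * T a y" by (simp add: algebra_simps)
    then show ?thesis by simp
  qed
  then show ?thesis using that d by blast
qed

lemma gapG:
  assumes a: "poly G a = 0" and b: "poly G b = 0" and ab: "a < b"
  shows "\<exists>y. a < y \<and> y < b \<and> poly H y = 0"
proof -
  define R where "R = {x. a < x \<and> x \<le> b \<and> poly G x = 0}"
  have fR: "finite R" unfolding R_def using poly_roots_finite[OF Gnz] by (rule rev_finite_subset) auto
  have "b \<in> R" using b ab by (simp add: R_def)
  define b' where "b' = Min R"
  have b'R: "b' \<in> R" using fR \<open>b \<in> R\<close> unfolding b'_def by (intro Min_in) auto
  then have b': "a < b'" "b' \<le> b" "poly G b' = 0" by (auto simp: R_def)
  have nor: "poly G x \<noteq> 0" if "a < x" "x < b'" for x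
  proof
    assume "poly G x = 0"
    then have "x \<in> R" using that b' by (simp add: R_def)
    then have "b' \<le> x" using fR by (simp add: b'_def)
    then show False using that by simp
  qed
  show ?thesis
  proof (rule ccontr)
    assume nH: "\<not> ?thesis"
    have Ha: "poly H a \<noteq> 0" and Hb: "poly H b' \<noteq> 0" using disj a b' by auto
    have HH: "poly H a * poly H b' > 0"
    proof (rule ccontr)
      assume "\<not> ?thesis"
      then have "poly H a * poly H b' < 0" using Ha Hb by (auto simp add: linorder_neq_iff zero_less_mult_iff mult_less_0_iff)
      then obtain y where "y > a" "y < b'" "poly H y = 0" using poly_IVT[of a b' H] b' by auto
      then show False using nH b' by auto
    qed
    obtain d1 where d1: "d1 > 0"
      "\<And>y. \<bar>y - a\<bar> < d1 \<Longrightarrow> poly G y * poly H a * T a a = (y - a) * (T a y * T a a)"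
      "\<And>y. \<bar>y - a\<bar> < d1 \<Longrightarrow> T a y * T a a > 0"
      using loc[of a] a by metis
    obtain d2 where d2: "d2 > 0"
      "\<And>y. \<bar>y - b'\<bar> < d2 \<Longrightarrow> poly G y * poly H b' * T b' b' = (y - b') * (T b' y * T b' b')"
      "\<And>y. \<bar>y - b'\<bar> < d2 \<Longrightarrow> T b' y * T b' b' > 0"
      using loc[of b'] b'(3) by metis
    define e where "e = min (min d1 d2) ((b' - a) / 2) / 2"
    have m: "min (min d1 d2) ((b' - a) / 2) \<le> d1" "min (min d1 d2) ((b' - a) / 2) \<le> d2"
      "min (min d1 d2) ((b' - a) / 2) \<le> (b' - a) / 2" "min (min d1 d2) ((b' - a) / 2) > 0"
      using d1(1) d2(1) b'(1) by (simp_all only: min_le_iff_disj min_less_iff_conj) auto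
    have e: "e > 0" "e < d1" "e < d2" "e < (b' - a) / 2" using m d1 d2 b' unfolding e_def by linarith+
    define y1 where "y1 = a + e"
    define y2 where "y2 = b' - e"
    have y12: "a < y1" "y1 < y2" "y2 < b'" using e by (auto simp: y1_def y2_def)
    have ey1: "\<bar>y1 - a\<bar> < d1" "\<bar>y2 - b'\<bar> < d2" using e by (auto simp: y1_def y2_def)
    have eq1: "poly G y1 * poly H a * T a a = (y1 - a) * (T a y1 * T a a)"
      by (rule d1(2)[OF ey1(1)])
    have eq2: "poly G y2 * poly H b' * T b' b' = (y2 - b') * (T b' y2 * T b' b')"
      by (rule d2(2)[OF ey1(2)])
    have p1: "poly G y1 * poly H a * T a a > 0"
      unfolding eq1 using mult_pos_pos[of "y1 - a" "T a y1 * T a a"] d1(3)[OF ey1(1)] y12 by simp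
    have p2: "poly G y2 * poly H b' * T b' b' < 0"
      unfolding eq2 using mult_neg_pos[of "y2 - b'" "T b' y2 * T b' b'"] d2(3)[OF ey1(2)] y12 by simp
    have "poly G y1 * poly G y2 < 0"
    proof (rule ccontr)
      assume "\<not> ?thesis"
      then have g: "poly G y1 * poly G y2 \<ge> 0" by simp
      have "(poly G y1 * poly H a * T a a) * (poly G y2 * poly H b' * T b' b')
          = (poly G y1 * poly G y2) * ((poly H a * poly H b') * (T a a * T b' b'))"
        by (simp add: algebra_simps)
      also have "\<dots> \<ge> 0"
        using g HH Tnz[of a b'] mult_nonneg_nonneg[of "poly G y1 * poly G y2" "(poly H a * poly H b') * (T a a * T b' b')"]
        by simp
      finally have "0 \<le> (poly G y1 * poly H a * T a a) * (poly G y2 * poly H b' * T b' b')" .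
      moreover have "(poly G y1 * poly H a * T a a) * (poly G y2 * poly H b' * T b' b') < 0"
        using mult_pos_neg[OF p1 p2] .
      ultimately show False by simp
    qed
    then obtain y where "y > y1" "y < y2" "poly G y = 0" using poly_IVT[of y1 y2 G] y12 by auto
    then show False using nor y12 by auto
  qed
qed

end

lemma ilv_swap: "ilv G H T \<Longrightarrow> ilv H G (\<lambda>x y. - T x y)"
  unfolding ilv_def
  by (auto simp: algebra_simps)

context ilv
begin

lemma gapH:
  assumes "poly H a = 0" "poly H b = 0" "a < b"
  shows "\<exists>y. a < y \<and> y < b \<and> poly G y = 0"
  using ilv.gapG[OF ilv_swap[OF ilv_axioms]] assms by blast

lemma max_root:
  assumes Tp: "\<And>x. T x x > 0"
    and z: "poly G z = 0 \<or> poly H z = 0"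
    and above: "\<And>x. x > z \<Longrightarrow> poly G x \<noteq> 0 \<and> poly H x \<noteq> 0"
  shows "(poly G z = 0 \<longrightarrow> lead_coeff G * lead_coeff H > 0) \<and>
         (poly H z = 0 \<longrightarrow> lead_coeff G * lead_coeff H < 0)"
proof -
  obtain d where d: "d > 0"
    "\<And>y. \<bar>y - z\<bar> < d \<Longrightarrow> poly G z = 0 \<Longrightarrow> poly G y * poly H z * T z z = (y - z) * (T z y * T z z)"
    "\<And>y. \<bar>y - z\<bar> < d \<Longrightarrow> T z y * T z z > 0"
    using loc[of z] by metis
  define y where "y = z + d / 2"
  have y: "y > z" "\<bar>y - z\<bar> < d" using d by (auto simp: y_def)
  have sG: "poly G y * lead_coeff G > 0" using sgn_tail[OF Gnz, of y] above y by auto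
  have sH: "poly H y * lead_coeff H > 0" using sgn_tail[OF Hnz, of y] above y by auto
  have tz: "T z y > 0" using d(3)[OF y(2)] Tp[of z] by (simp add: zero_less_mult_iff)
  have c1: "poly G z = 0 \<longrightarrow> lead_coeff G * lead_coeff H > 0"
  proof
    assume Gz: "poly G z = 0"
    then have Hz: "poly H z \<noteq> 0" using disj by auto
    have sH': "poly H z * lead_coeff H > 0"
      using sgn_tail[OF Hnz, of z] above Hz by (metis order_le_less)
    have "poly G y * poly H z = (y - z) * T z y"
      using iden[of z y] Gz by (simp add: algebra_simps)
    then have "poly G y * poly H z > 0" using y tz by simp
    then have "lead_coeff G * poly H z > 0" using sG by (metis pos_trans mult.commute)
    then show "lead_coeff G * lead_coeff H > 0" using sH' by (metis pos_trans)
  qed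
  have c2: "poly H z = 0 \<longrightarrow> lead_coeff G * lead_coeff H < 0"
  proof
    assume Hz: "poly H z = 0"
    then have Gz: "poly G z \<noteq> 0" using disj by auto
    have sG': "poly G z * lead_coeff G > 0"
      using sgn_tail[OF Gnz, of z] above Gz by (metis order_le_less)
    have "poly G z * poly H y = (z - y) * T z y"
      using iden[of z y] Hz by (simp add: algebra_simps)
    then have "poly G z * poly H y < 0" using y tz by (simp add: mult_neg_pos)
    then have "poly G z * (- poly H y) > 0" by simp
    then have "lead_coeff G * (- poly H y) > 0" using sG' by (metis pos_trans mult.commute)
    then have "lead_coeff G * (- lead_coeff H) > 0" using sH
      by (metis pos_trans mult_minus_left mult_minus_right)
    then show "lead_coeff G * lead_coeff H < 0" by simp
  qed
  show ?thesis using c1 c2 by blast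
qed

end



lemma cnt_int:
  fixes X Y :: "real set" and P :: "real \<Rightarrow> bool"
  assumes fX: "finite X" and fY: "finite Y"
    and gap: "\<And>a b. a \<in> Y \<Longrightarrow> b \<in> Y \<Longrightarrow> a < b \<Longrightarrow> \<exists>x\<in>X. a < x \<and> x < b"
    and up: "\<And>u v. P u \<Longrightarrow> u \<le> v \<Longrightarrow> P v"
  shows "card {y\<in>Y. P y \<and> y \<le> b} \<le> card {x\<in>X. P x \<and> x < b} + 1"
proof (induction "card {y\<in>Y. P y \<and> y \<le> b}" arbitrary: b rule: less_induct)
  case less
  define S where "S = {y\<in>Y. P y \<and> y \<le> b}"
  have fS: "finite S" using fY by (simp add: S_def)
  show ?case
  proof (cases "card S \<le> 1")
    case True then show ?thesis by (simp add: S_def)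
  next
    case False
    then have Sne: "S \<noteq> {}" by auto
    define y1 where "y1 = Max S"
    have y1S: "y1 \<in> S" using fS Sne by (simp add: y1_def)
    define S' where "S' = S - {y1}"
    have cS': "card S' = card S - 1" using y1S fS by (simp add: S'_def)
    then have S'ne: "S' \<noteq> {}" using False by auto
    have fS': "finite S'" using fS by (simp add: S'_def)
    define y0 where "y0 = Max S'"
    have y0S': "y0 \<in> S'" using fS' S'ne by (simp add: y0_def)
    have y0y1: "y0 < y1"
    proof -
      have "y0 \<le> y1" using y0S' fS by (simp add: S'_def y1_def)
      moreover have "y0 \<noteq> y1" using y0S' by (simp add: S'_def)
      ultimately show ?thesis by simp
    qed
    have S'eq: "S' = {y\<in>Y. P y \<and> y \<le> y0}"
    proof
      show "S' \<subseteq> {y\<in>Y. P y \<and> y \<le> y0}" using fS' by (auto simp: y0_def S'_def S_def)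
      show "{y\<in>Y. P y \<and> y \<le> y0} \<subseteq> S'" using y0S' y0y1 y1S by (auto simp: S'_def S_def)
    qed
    have lt: "card {y\<in>Y. P y \<and> y \<le> y0} < card {y\<in>Y. P y \<and> y \<le> b}"
      using cS' S'eq False by (simp add: S_def)
    have IH: "card S' \<le> card {x\<in>X. P x \<and> x < y0} + 1"
      using less(1)[OF lt] S'eq by simp
    obtain x where x: "x \<in> X" "y0 < x" "x < y1" using gap[of y0 y1] y0S' y1S y0y1 by (auto simp: S'_def S_def)
    have Py0: "P y0" using y0S' by (simp add: S'_def S_def)
    have y1b: "y1 \<le> b" using y1S by (simp add: S_def)
    have sub: "insert x {x\<in>X. P x \<and> x < y0} \<subseteq> {x\<in>X. P x \<and> x < b}"
      using x up[OF Py0, of x] y1b y0y1 by auto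
    have "card (insert x {x\<in>X. P x \<and> x < y0}) = card {x\<in>X. P x \<and> x < y0} + 1"
      using x fX by simp
    moreover have "card (insert x {x\<in>X. P x \<and> x < y0}) \<le> card {x\<in>X. P x \<and> x < b}"
      by (rule card_mono) (use fX sub in auto)
    ultimately show ?thesis using IH cS' False by (simp add: S_def)
  qed
qed

lemma cntA:
  fixes X Y :: "real set"
  assumes fX: "finite X" and fY: "finite Y"
    and gap: "\<And>a b. a \<in> Y \<Longrightarrow> b \<in> Y \<Longrightarrow> a < b \<Longrightarrow> \<exists>x\<in>X. a < x \<and> x < b"
  shows "card {y\<in>Y. y \<le> t} \<le> card {x\<in>X. x \<le> t} + 1"
proof -
  have "card {y\<in>Y. True \<and> y \<le> t} \<le> card {x\<in>X. True \<and> x < t} + 1"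
    by (rule cnt_int[OF fX fY gap]) auto
  moreover have "card {x\<in>X. x < t} \<le> card {x\<in>X. x \<le> t}" by (rule card_mono) (use fX in auto)
  ultimately show ?thesis by simp
qed

lemma cntA':
  fixes X Y :: "real set"
  assumes fX: "finite X" and fY: "finite Y"
    and gap: "\<And>a b. a \<in> Y \<Longrightarrow> b \<in> Y \<Longrightarrow> a < b \<Longrightarrow> \<exists>x\<in>X. a < x \<and> x < b"
  shows "card {y\<in>Y. t < y} \<le> card {x\<in>X. t < x} + 1"
proof (cases "{y\<in>Y. t < y} = {}")
  case True then have "card {y\<in>Y. t < y} = 0" by (simp only: card.empty)
  then show ?thesis by simp
next
  case False
  define b where "b = Max {y\<in>Y. t < y}"
  have bin: "b \<in> {y\<in>Y. t < y}" unfolding b_def by (rule Max_in) (use False fY in auto)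
  have e: "{y\<in>Y. t < y} = {y\<in>Y. t < y \<and> y \<le> b}" using fY by (auto simp: b_def)
  have "card {y\<in>Y. t < y \<and> y \<le> b} \<le> card {x\<in>X. t < x \<and> x < b} + 1"
    by (rule cnt_int[OF fX fY gap]) auto
  moreover have "card {x\<in>X. t < x \<and> x < b} \<le> card {x\<in>X. t < x}" by (rule card_mono) (use fX in auto)
  ultimately show ?thesis using e by simp
qed

lemma cntB:
  fixes X Y :: "real set"
  assumes fX: "finite X" and fY: "finite Y"
    and gap: "\<And>a b. a \<in> Y \<Longrightarrow> b \<in> Y \<Longrightarrow> a < b \<Longrightarrow> \<exists>x\<in>X. a < x \<and> x < b"
    and top: "\<exists>z\<in>X. \<forall>y\<in>Y. y < z"
  shows "card {y\<in>Y. t < y} \<le> card {x\<in>X. t < x}"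
proof (cases "{y\<in>Y. t < y} = {}")
  case True then have "card {y\<in>Y. t < y} = 0" by (simp only: card.empty)
  then show ?thesis by simp
next
  case False
  define b where "b = Max {y\<in>Y. t < y}"
  have bin: "b \<in> {y\<in>Y. t < y}" unfolding b_def by (rule Max_in) (use False fY in auto)
  obtain z where z: "z \<in> X" "\<forall>y\<in>Y. y < z" using top by blast
  have bz: "b < z" using z bin by auto
  have e: "{y\<in>Y. t < y} = {y\<in>Y. t < y \<and> y \<le> b}" using fY by (auto simp: b_def)
  have "card {y\<in>Y. t < y \<and> y \<le> b} \<le> card {x\<in>X. t < x \<and> x < b} + 1"
    by (rule cnt_int[OF fX fY gap]) auto
  moreover have "card (insert z {x\<in>X. t < x \<and> x < b}) = card {x\<in>X. t < x \<and> x < b} + 1"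
    using bz fX by simp
  moreover have "card (insert z {x\<in>X. t < x \<and> x < b}) \<le> card {x\<in>X. t < x}"
    by (rule card_mono) (use fX z bz bin in auto)
  ultimately show ?thesis using e by simp
qed

lemma card_split:
  fixes X :: "real set" assumes "finite X"
  shows "card {x\<in>X. x \<le> t} + card {x\<in>X. t < x} = card X"
proof -
  have "X = {x\<in>X. x \<le> t} \<union> {x\<in>X. t < x}" by auto
  moreover have "{x\<in>X. x \<le> t} \<inter> {x\<in>X. t < x} = {}" by auto
  ultimately show ?thesis using assms card_Un_disjoint[of "{x\<in>X. x \<le> t}" "{x\<in>X. t < x}"]
    by (metis (no_types, lifting) finite_Un)
qed

lemma cnt_nth:
  fixes X :: "real set"
  assumes fX: "finite X" and i: "i < card X"
  shows "sorted_list_of_set X ! i \<le> t \<longleftrightarrow> i < card {x\<in>X. x \<le> t}"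
proof -
  define xs where "xs = sorted_list_of_set X"
  have sx: "sorted xs" "distinct xs" "set xs = X" "length xs = card X"
    using fX by (simp_all add: xs_def)
  show ?thesis unfolding xs_def[symmetric]
  proof
    assume h: "xs ! i \<le> t"
    have sub: "nth xs ` {..i} \<subseteq> {x\<in>X. x \<le> t}"
    proof
      fix x assume "x \<in> nth xs ` {..i}"
      then obtain j where j: "j \<le> i" "x = xs ! j" by auto
      have "xs ! j \<le> xs ! i" using sorted_nth_mono[OF sx(1) j(1)] i sx(4) by simp
      then show "x \<in> {x\<in>X. x \<le> t}" using j h i sx by (auto simp: nth_mem)
    qed
    have "card (nth xs ` {..i}) = Suc i"
      using inj_on_nth[OF sx(2), of "{..i}"] i sx(4) by (simp add: card_image)
    moreover have "card (nth xs ` {..i}) \<le> card {x\<in>X. x \<le> t}"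
      by (rule card_mono) (use fX sub in auto)
    ultimately show "i < card {x\<in>X. x \<le> t}" by simp
  next
    assume h: "i < card {x\<in>X. x \<le> t}"
    show "xs ! i \<le> t"
    proof (rule ccontr)
      assume "\<not> xs ! i \<le> t"
      then have ti: "t < xs ! i" by simp
      have sub: "{x\<in>X. x \<le> t} \<subseteq> nth xs ` {..<i}"
      proof
        fix x assume x: "x \<in> {x\<in>X. x \<le> t}"
        then obtain j where j: "j < length xs" "x = xs ! j" using sx(3) by (auto simp: in_set_conv_nth)
        have "j < i"
        proof (rule ccontr)
          assume "\<not> j < i"
          then have "xs ! i \<le> xs ! j" using sorted_nth_mono[OF sx(1)] j(1) by simp
          then show False using x j ti by auto
        qed
        then show "x \<in> nth xs ` {..<i}" using j by auto
      qed
      have "card {x\<in>X. x \<le> t} \<le> card (nth xs ` {..<i})" by (rule card_mono) (use sub in auto)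
      also have "\<dots> \<le> i" using card_image_le[of "{..<i}" "nth xs"] by simp
      finally show False using h by simp
    qed
  qed
qed

lemma pattern_eq:
  fixes X Y :: "real set"
  assumes fX: "finite X" and fY: "finite Y" and disj: "X \<inter> Y = {}"
    and gX: "\<And>a b. a \<in> X \<Longrightarrow> b \<in> X \<Longrightarrow> a < b \<Longrightarrow> \<exists>y\<in>Y. a < y \<and> y < b"
    and gY: "\<And>a b. a \<in> Y \<Longrightarrow> b \<in> Y \<Longrightarrow> a < b \<Longrightarrow> \<exists>x\<in>X. a < x \<and> x < b"
    and top: "\<exists>z\<in>X. \<forall>y\<in>Y. y < z"
    and cc: "card X = card Y"
    and i: "i < card X"
  shows "sorted_list_of_set Y ! i < sorted_list_of_set X ! i \<and>
         (i + 1 < card X \<longrightarrow> sorted_list_of_set X ! i < sorted_list_of_set Y ! (i + 1))"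
proof -
  let ?xs = "sorted_list_of_set X" and ?ys = "sorted_list_of_set Y"
  have xX: "?xs ! k \<in> X" if "k < card X" for k using that fX
    by (metis length_sorted_list_of_set nth_mem set_sorted_list_of_set)
  have yY: "?ys ! k \<in> Y" if "k < card Y" for k using that fY
    by (metis length_sorted_list_of_set nth_mem set_sorted_list_of_set)
  have dXY: "card {x\<in>X. x \<le> t} \<le> card {y\<in>Y. y \<le> t}" for t
    using cntB[OF fX fY gY top, of t] card_split[OF fX, of t] card_split[OF fY, of t] cc by linarith
  have dYX: "card {y\<in>Y. y \<le> t} \<le> card {x\<in>X. x \<le> t} + 1" for t
    using cntA[OF fX fY gY] by blast
  have 1: "?ys ! i < ?xs ! i"
  proof -
    have "i < card {x\<in>X. x \<le> ?xs ! i}" using cnt_nth[OF fX i, of "?xs ! i"] by simp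
    then have "i < card {y\<in>Y. y \<le> ?xs ! i}" using dXY by (meson order_less_le_trans)
    then have "?ys ! i \<le> ?xs ! i" using cnt_nth[OF fY, of i] i cc by simp
    moreover have "?ys ! i \<noteq> ?xs ! i" using xX[OF i] yY[of i] i cc disj by auto
    ultimately show ?thesis by simp
  qed
  have 2: "?xs ! i < ?ys ! (i + 1)" if h: "i + 1 < card X"
  proof -
    have "i + 1 < card {y\<in>Y. y \<le> ?ys ! (i + 1)}" using cnt_nth[OF fY, of "i + 1" "?ys ! (i + 1)"] h cc by simp
    then have "i < card {x\<in>X. x \<le> ?ys ! (i + 1)}" using dYX[of "?ys ! (i + 1)"] by linarith
    then have "?xs ! i \<le> ?ys ! (i + 1)" using cnt_nth[OF fX i] by simp
    moreover have "?ys ! (i + 1) \<noteq> ?xs ! i" using xX[OF i] yY[of "i + 1"] h cc disj by auto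
    ultimately show ?thesis by simp
  qed
  show ?thesis using 1 2 by blast
qed

lemma pattern_plus:
  fixes X Y :: "real set"
  assumes fX: "finite X" and fY: "finite Y" and disj: "X \<inter> Y = {}"
    and gX: "\<And>a b. a \<in> X \<Longrightarrow> b \<in> X \<Longrightarrow> a < b \<Longrightarrow> \<exists>y\<in>Y. a < y \<and> y < b"
    and gY: "\<And>a b. a \<in> Y \<Longrightarrow> b \<in> Y \<Longrightarrow> a < b \<Longrightarrow> \<exists>x\<in>X. a < x \<and> x < b"
    and cc: "card X = card Y + 1"
    and i: "i < card Y"
  shows "sorted_list_of_set X ! i < sorted_list_of_set Y ! i \<and>
         sorted_list_of_set Y ! i < sorted_list_of_set X ! (i + 1)"
proof -
  let ?xs = "sorted_list_of_set X" and ?ys = "sorted_list_of_set Y"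
  have xX: "?xs ! k \<in> X" if "k < card X" for k using that fX
    by (metis length_sorted_list_of_set nth_mem set_sorted_list_of_set)
  have yY: "?ys ! k \<in> Y" if "k < card Y" for k using that fY
    by (metis length_sorted_list_of_set nth_mem set_sorted_list_of_set)
  have dYX: "card {y\<in>Y. y \<le> t} \<le> card {x\<in>X. x \<le> t}" for t
    using cntA'[OF fY fX gX, of t] card_split[OF fX, of t] card_split[OF fY, of t] cc by linarith
  have dXY: "card {x\<in>X. x \<le> t} \<le> card {y\<in>Y. y \<le> t} + 1" for t
    using cntA[OF fY fX gX] by blast
  have iX: "i < card X" "i + 1 < card X" using i cc by auto
  have 1: "?xs ! i < ?ys ! i"
  proof -
    have "i < card {y\<in>Y. y \<le> ?ys ! i}" using cnt_nth[OF fY i, of "?ys ! i"] by simp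
    then have "i < card {x\<in>X. x \<le> ?ys ! i}" using dYX by (meson order_less_le_trans)
    then have "?xs ! i \<le> ?ys ! i" using cnt_nth[OF fX iX(1)] by simp
    moreover have "?ys ! i \<noteq> ?xs ! i" using xX[OF iX(1)] yY[OF i] disj by auto
    ultimately show ?thesis by simp
  qed
  have 2: "?ys ! i < ?xs ! (i + 1)"
  proof -
    have "i + 1 < card {x\<in>X. x \<le> ?xs ! (i + 1)}" using cnt_nth[OF fX iX(2), of "?xs ! (i + 1)"] by simp
    then have "i < card {y\<in>Y. y \<le> ?xs ! (i + 1)}" using dXY[of "?xs ! (i + 1)"] by linarith
    then have "?ys ! i \<le> ?xs ! (i + 1)" using cnt_nth[OF fY i] by simp
    moreover have "?ys ! i \<noteq> ?xs ! (i + 1)" using xX[OF iX(2)] yY[OF i] disj by auto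
    ultimately show ?thesis by simp
  qed
  show ?thesis using 1 2 by blast
qed




context ilv
begin

lemma deriv_nz:
  assumes a: "poly G a = 0" shows "poly (pderiv G) a \<noteq> 0"
proof -
  have Ha: "poly H a \<noteq> 0" using disj a by auto
  have ev: "eventually (\<lambda>y. (poly G y - poly G a) / (y - a) = T a y / poly H a) (at a)"
    unfolding eventually_at
  proof (intro exI[of _ 1] conjI ballI impI)
    fix y :: real assume "y \<in> UNIV" "y \<noteq> a \<and> dist y a < 1"
    then have ya: "y \<noteq> a" by auto
    have "- (poly G y * poly H a) = (a - y) * T a y" using iden[of a y] a by simp
    then have "poly G y * poly H a = (y - a) * T a y" by (simp add: algebra_simps)
    then show "(poly G y - poly G a) / (y - a) = T a y / poly H a"
      using ya Ha a by (simp add: field_simps)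
  qed simp
  have d: "((\<lambda>y. (poly G y - poly G a) / (y - a)) \<longlongrightarrow> poly (pderiv G) a) (at a)"
    using poly_DERIV[of G a] by (simp add: has_field_derivative_iff)
  have t: "((\<lambda>y. T a y / poly H a) \<longlongrightarrow> T a a / poly H a) (at a)"
    using Tc[of a] Ha by (intro tendsto_intros) (simp add: isCont_def)
  have "((\<lambda>y. (poly G y - poly G a) / (y - a)) \<longlongrightarrow> T a a / poly H a) (at a)"
    using t tendsto_cong[OF ev] by blast
  then have "poly (pderiv G) a = T a a / poly H a"
    using d by (intro tendsto_unique[of "at a"]) auto
  then show ?thesis using Tnz1[of a] Ha by simp
qed

end

lemma card_real_roots:
  fixes p :: "real poly"
  assumes p: "p \<noteq> 0"
    and real: "\<And>z. poly (mp p :: complex poly) z = 0 \<Longrightarrow> Im z = 0"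
    and simple: "\<And>x. poly p x = 0 \<Longrightarrow> poly (pderiv p) x \<noteq> 0"
  shows "card {x. poly p x = 0} = degree p"
proof -
  let ?pc = "mp p :: complex poly"
  have roots: "{z. poly ?pc z = 0} = of_real ` {x. poly p x = 0}"
  proof
    show "{z. poly ?pc z = 0} \<subseteq> of_real ` {x. poly p x = 0}"
    proof
      fix z assume z: "z \<in> {z. poly ?pc z = 0}"
      then have "Im z = 0" using real by auto
      then have zz: "z = of_real (Re z)" by (simp add: complex_eq_iff)
      have "(of_real (poly p (Re z)) :: complex) = poly ?pc (of_real (Re z))" by (simp add: poly_mp_of_real)
      also have "\<dots> = poly ?pc z" using zz by simp
      also have "\<dots> = 0" using z by simp
      finally have "poly p (Re z) = 0" by simp
      then show "z \<in> of_real ` {x. poly p x = 0}" using zz by blast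
    qed
    show "of_real ` {x. poly p x = 0} \<subseteq> {z. poly ?pc z = 0}"
      by (auto simp: poly_mp_of_real)
  qed
  have rsq: "rsquarefree ?pc"
    unfolding rsquarefree_roots
  proof (intro allI notI)
    fix a assume h: "poly ?pc a = 0 \<and> poly (pderiv ?pc) a = 0"
    then obtain x where x: "a = of_real x" "poly p x = 0" using roots by blast
    have "poly (pderiv ?pc) a = of_real (poly (pderiv p) x)"
      using x by (simp add: pderiv_mp poly_mp_of_real)
    then show False using h simple[OF x(2)] by simp
  qed
  have pc0: "?pc \<noteq> 0" using p by (simp add: map_poly_eq_0_iff)
  have "degree ?pc = degree (smult (lead_coeff ?pc) (\<Prod>z|poly ?pc z = 0. [:-z, 1:]))"
    using complex_poly_decompose_rsquarefree[OF rsq] by simp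
  also have "\<dots> = (\<Sum>z|poly ?pc z = 0. degree [:-z, 1:])"
    using pc0 by (simp add: degree_prod_sum_eq)
  also have "\<dots> = card {z. poly ?pc z = 0}" by simp
  also have "\<dots> = card {x. poly p x = 0}" unfolding roots
    by (rule card_image) (simp add: inj_on_def)
  finally show ?thesis by (simp add: degree_mp)
qed

context slp
begin

definition cc :: "real \<Rightarrow> real" where "cc \<alpha> = sin \<alpha> + cos \<alpha> / f 0"

definition PhU :: "real \<Rightarrow> real poly" where
  "PhU \<beta> = smult (cos \<beta>) (PY 1 0 N) - smult (sin \<beta>) (PQ 1 0 N)"
definition PhV :: "real \<Rightarrow> real poly" where
  "PhV \<beta> = smult (cos \<beta>) (PY (- 1 / f 0) 1 N) - smult (sin \<beta>) (PQ (- 1 / f 0) 1 N)"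

lemma phiP_split: "phiP \<alpha> \<beta> = smult (cc \<alpha>) (PhU \<beta>) + smult (cos \<alpha>) (PhV \<beta>)"
proof -
  have f0: "f 0 \<noteq> 0" using f_nz by auto
  have "poly (phiP \<alpha> \<beta>) x = poly (smult (cc \<alpha>) (PhU \<beta>) + smult (cos \<alpha>) (PhV \<beta>)) x" for x
  proof -
    have l1: "sy x (sin \<alpha>) (cos \<alpha>) N = sin \<alpha> * sy x 1 0 N + cos \<alpha> * sy x 0 1 N"
      "sQ x (sin \<alpha>) (cos \<alpha>) N = sin \<alpha> * sQ x 1 0 N + cos \<alpha> * sQ x 0 1 N"
      using lin[of x "sin \<alpha>" "cos \<alpha>" N] by auto
    have l2: "sy x (- 1 / f 0) 1 N = (- 1 / f 0) * sy x 1 0 N + sy x 0 1 N"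
      "sQ x (- 1 / f 0) 1 N = (- 1 / f 0) * sQ x 1 0 N + sQ x 0 1 N"
      using lin[of x "- 1 / f 0" 1 N] by auto
    show ?thesis
      unfolding phir_poly phir_def PhU_def PhV_def cc_def poly_add poly_diff poly_smult
        link_real_y[symmetric] link_real_Q[symmetric] l1 l2
      by (simp add: field_simps f0)
  qed
  then show ?thesis by (simp add: poly_eq_poly_eq_iff[symmetric] fun_eq_iff)
qed

lemma sc_ne: "sin (b::real) = 0 \<Longrightarrow> cos b \<noteq> 0"
  using sin_cos_squared_add[of b] by auto

lemma PhU_deg:
  "PhU \<beta> \<noteq> 0 \<and> degree (PhU \<beta>) = (if sin \<beta> = 0 then N - 1 else N) \<and>
   lead_coeff (PhU \<beta>) = (if sin \<beta> = 0 then cos \<beta> * lead_coeff (PY 1 0 N) else - sin \<beta> * lead_coeff (PQ 1 0 N))"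
proof (cases "sin \<beta> = 0")
  case True
  then have "PhU \<beta> = smult (cos \<beta>) (PY 1 0 N)" by (simp add: PhU_def)
  then show ?thesis using True sc_ne[OF True] degU by (simp add: lead_coeff_smult)
next
  case False
  have d: "degree (smult (cos \<beta>) (PY 1 0 N)) < degree (- smult (sin \<beta>) (PQ 1 0 N))"
    using degU False N2 by auto
  have "PhU \<beta> = smult (cos \<beta>) (PY 1 0 N) + - smult (sin \<beta>) (PQ 1 0 N)" by (simp add: PhU_def)
  then have e: "degree (PhU \<beta>) = N" "lead_coeff (PhU \<beta>) = - sin \<beta> * lead_coeff (PQ 1 0 N)"
    using degree_add_eq_right[OF d] lead_coeff_add_le[OF d] degU False
    by (simp_all add: lead_coeff_minus lead_coeff_smult)
  have lq: "lead_coeff (PQ 1 0 N) \<noteq> 0" using degU by (metis leading_coeff_0_iff)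
  have "lead_coeff (PhU \<beta>) \<noteq> 0" using e(2) lq False by (metis mult_eq_0_iff neg_equal_0_iff_equal)
  then have "PhU \<beta> \<noteq> 0" by (metis leading_coeff_0_iff)
  then show ?thesis using e False by simp
qed

lemma PhV_deg:
  "PhV \<beta> \<noteq> 0 \<and> degree (PhV \<beta>) = (if sin \<beta> = 0 then N - 2 else N - 1) \<and>
   lead_coeff (PhV \<beta>) = (if sin \<beta> = 0 then cos \<beta> * lead_coeff (PY (- 1 / f 0) 1 N) else - sin \<beta> * lead_coeff (PQ (- 1 / f 0) 1 N))"
proof (cases "sin \<beta> = 0")
  case True
  then have "PhV \<beta> = smult (cos \<beta>) (PY (- 1 / f 0) 1 N)" by (simp add: PhV_def)
  then show ?thesis using True sc_ne[OF True] degV by (simp add: lead_coeff_smult)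
next
  case False
  have d: "degree (smult (cos \<beta>) (PY (- 1 / f 0) 1 N)) < degree (- smult (sin \<beta>) (PQ (- 1 / f 0) 1 N))"
    using degV False N2 by auto
  have "PhV \<beta> = smult (cos \<beta>) (PY (- 1 / f 0) 1 N) + - smult (sin \<beta>) (PQ (- 1 / f 0) 1 N)" by (simp add: PhV_def)
  then have e: "degree (PhV \<beta>) = N - 1" "lead_coeff (PhV \<beta>) = - sin \<beta> * lead_coeff (PQ (- 1 / f 0) 1 N)"
    using degree_add_eq_right[OF d] lead_coeff_add_le[OF d] degV False
    by (simp_all add: lead_coeff_minus lead_coeff_smult)
  have lq: "lead_coeff (PQ (- 1 / f 0) 1 N) \<noteq> 0" using degV by (metis leading_coeff_0_iff)
  have "lead_coeff (PhV \<beta>) \<noteq> 0" using e(2) lq False by (metis mult_eq_0_iff neg_equal_0_iff_equal)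
  then have "PhV \<beta> \<noteq> 0" by (metis leading_coeff_0_iff)
  then show ?thesis using e False by simp
qed

lemma phiP_deg:
  "phiP \<alpha> \<beta> \<noteq> 0 \<and>
   degree (phiP \<alpha> \<beta>) = (if cc \<alpha> \<noteq> 0 then (if sin \<beta> = 0 then N - 1 else N) else (if sin \<beta> = 0 then N - 2 else N - 1)) \<and>
   lead_coeff (phiP \<alpha> \<beta>) = (if cc \<alpha> \<noteq> 0 then cc \<alpha> * lead_coeff (PhU \<beta>) else cos \<alpha> * lead_coeff (PhV \<beta>))"
proof (cases "cc \<alpha> = 0")
  case True
  have ca: "cos \<alpha> \<noteq> 0"
  proof
    assume "cos \<alpha> = 0" then have "sin \<alpha> = 0" using True by (simp add: cc_def)
    then show False using sc_ne \<open>cos \<alpha> = 0\<close> by auto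
  qed
  have "phiP \<alpha> \<beta> = smult (cos \<alpha>) (PhV \<beta>)" using True by (simp add: phiP_split)
  then show ?thesis using True ca PhV_deg[of \<beta>] by (simp add: lead_coeff_smult)
next
  case False
  have d: "degree (smult (cos \<alpha>) (PhV \<beta>)) < degree (smult (cc \<alpha>) (PhU \<beta>))"
    using PhU_deg[of \<beta>] PhV_deg[of \<beta>] False N2 by auto
  have e: "degree (phiP \<alpha> \<beta>) = degree (PhU \<beta>)" "lead_coeff (phiP \<alpha> \<beta>) = cc \<alpha> * lead_coeff (PhU \<beta>)"
    unfolding phiP_split using degree_add_eq_left[OF d] lead_coeff_add_le[OF d] False
    by (simp_all add: add.commute lead_coeff_smult)
  have lq: "lead_coeff (PhU \<beta>) \<noteq> 0" using PhU_deg[of \<beta>] by (metis leading_coeff_0_iff)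
  have "lead_coeff (phiP \<alpha> \<beta>) \<noteq> 0" using e(2) False lq by (metis mult_eq_0_iff)
  then have "phiP \<alpha> \<beta> \<noteq> 0" by (metis leading_coeff_0_iff)
  then show ?thesis using e False PhU_deg[of \<beta>] by simp
qed

definition RR :: "real \<Rightarrow> real \<Rightarrow> real set" where
  "RR \<alpha> \<beta> = {x. poly (phiP \<alpha> \<beta>) x = 0}"

lemma ilv_beta: "sin (\<beta> - \<beta>') \<noteq> 0 \<Longrightarrow> ilv (phiP \<alpha> \<beta>) (phiP \<alpha> \<beta>') (\<lambda>x y. sin (\<beta> - \<beta>') * Sb \<alpha> x y)"
  unfolding ilv_def
proof (intro conjI allI)
  assume s: "sin (\<beta> - \<beta>') \<noteq> 0"
  fix x y
  show "poly (phiP \<alpha> \<beta>) x * poly (phiP \<alpha> \<beta>') y - poly (phiP \<alpha> \<beta>) y * poly (phiP \<alpha> \<beta>') x =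
        (x - y) * (sin (\<beta> - \<beta>') * Sb \<alpha> x y)"
    unfolding phir_poly beta_ident by (simp add: algebra_simps)
  have "(sin (\<beta> - \<beta>'))\<^sup>2 > 0" using s by simp
  then have s2: "0 < sin (\<beta> - \<beta>') * sin (\<beta> - \<beta>')" by (simp add: power2_eq_square)
  have "0 < (sin (\<beta> - \<beta>') * sin (\<beta> - \<beta>')) * (Sb \<alpha> x x * Sb \<alpha> y y)"
    by (rule mult_pos_pos[OF s2 mult_pos_pos[OF Sb_pos Sb_pos]])
  then show "0 < sin (\<beta> - \<beta>') * Sb \<alpha> x x * (sin (\<beta> - \<beta>') * Sb \<alpha> y y)"
    by (simp add: mult_ac)
  show "isCont (\<lambda>y. sin (\<beta> - \<beta>') * Sb \<alpha> x y) x" by (intro continuous_intros Sb_cont)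
qed (use phiP_deg in auto)

lemma ilv_alpha: "sin (\<alpha>' - \<alpha>) \<noteq> 0 \<Longrightarrow> ilv (phiP \<alpha> \<beta>) (phiP \<alpha>' \<beta>) (\<lambda>x y. sin (\<alpha>' - \<alpha>) * Sa \<beta> x y)"
  unfolding ilv_def
proof (intro conjI allI)
  assume s: "sin (\<alpha>' - \<alpha>) \<noteq> 0"
  fix x y
  show "poly (phiP \<alpha> \<beta>) x * poly (phiP \<alpha>' \<beta>) y - poly (phiP \<alpha> \<beta>) y * poly (phiP \<alpha>' \<beta>) x =
        (x - y) * (sin (\<alpha>' - \<alpha>) * Sa \<beta> x y)"
    unfolding phir_poly alpha_ident by (simp add: algebra_simps)
  have "(sin (\<alpha>' - \<alpha>))\<^sup>2 > 0" using s by simp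
  then have s2: "0 < sin (\<alpha>' - \<alpha>) * sin (\<alpha>' - \<alpha>)" by (simp add: power2_eq_square)
  have "0 < (sin (\<alpha>' - \<alpha>) * sin (\<alpha>' - \<alpha>)) * (Sa \<beta> x x * Sa \<beta> y y)"
    by (rule mult_pos_pos[OF s2 mult_pos_pos[OF Sa_pos Sa_pos]])
  then show "0 < sin (\<alpha>' - \<alpha>) * Sa \<beta> x x * (sin (\<alpha>' - \<alpha>) * Sa \<beta> y y)"
    by (simp add: mult_ac)
  show "isCont (\<lambda>y. sin (\<alpha>' - \<alpha>) * Sa \<beta> x y) x" by (intro continuous_intros Sa_cont)
qed (use phiP_deg in auto)

lemma card_RR: "finite (RR \<alpha> \<beta>) \<and> card (RR \<alpha> \<beta>) = degree (phiP \<alpha> \<beta>)"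
proof -
  have nz: "phiP \<alpha> \<beta> \<noteq> 0" using phiP_deg by auto
  have "sin (\<beta> - (\<beta> - pi / 2)) \<noteq> 0" by simp
  then interpret I: ilv "phiP \<alpha> \<beta>" "phiP \<alpha> (\<beta> - pi / 2)" "\<lambda>x y. sin (\<beta> - (\<beta> - pi / 2)) * Sb \<alpha> x y"
    by (rule ilv_beta)
  have "card {x. poly (phiP \<alpha> \<beta>) x = 0} = degree (phiP \<alpha> \<beta>)"
  proof (rule card_real_roots[OF nz])
    fix z :: complex assume "poly (mp (phiP \<alpha> \<beta>)) z = 0"
    then show "Im z = 0" using eig_real[of \<alpha> \<beta> z] by (simp add: phic_poly)
  next
    fix x assume "poly (phiP \<alpha> \<beta>) x = 0"
    then show "poly (pderiv (phiP \<alpha> \<beta>)) x \<noteq> 0" by (rule I.deriv_nz)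
  qed
  then show ?thesis using poly_roots_finite[OF nz] by (simp add: RR_def)
qed

lemma eig_set: "{z. sl_is_eigenvalue f q w N (S_A \<alpha>) (S_B \<beta>) z} = of_real ` RR \<alpha> \<beta>"
proof
  show "{z. sl_is_eigenvalue f q w N (S_A \<alpha>) (S_B \<beta>) z} \<subseteq> of_real ` RR \<alpha> \<beta>"
  proof
    fix z assume "z \<in> {z. sl_is_eigenvalue f q w N (S_A \<alpha>) (S_B \<beta>) z}"
    then have z: "phic \<alpha> \<beta> z = 0" by (simp add: eigen_iff)
    then have "Im z = 0" by (rule eig_real)
    then have zz: "z = of_real (Re z)" by (simp add: complex_eq_iff)
    then have "of_real (poly (phiP \<alpha> \<beta>) (Re z)) = (0::complex)"
      using z by (metis phic_poly poly_mp_of_real)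
    then show "z \<in> of_real ` RR \<alpha> \<beta>" using zz by (auto simp: RR_def)
  qed
  show "of_real ` RR \<alpha> \<beta> \<subseteq> {z. sl_is_eigenvalue f q w N (S_A \<alpha>) (S_B \<beta>) z}"
    by (auto simp: RR_def eigen_iff phic_poly poly_mp_of_real)
qed

lemma num_eig: "sl_num_eigenvalues_is f q w N (S_A \<alpha>) (S_B \<beta>) (degree (phiP \<alpha> \<beta>))"
proof -
  have m: "sl_mult f q w N (S_A \<alpha>) (S_B \<beta>) z = 1" if "z \<in> of_real ` RR \<alpha> \<beta>" for z
    using that by (intro mult_one) (auto simp: RR_def phic_poly poly_mp_of_real)
  have "(\<Sum>lam\<in>of_real ` RR \<alpha> \<beta>. sl_mult f q w N (S_A \<alpha>) (S_B \<beta>) lam) = card (of_real ` RR \<alpha> \<beta> :: complex set)"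
    using m by simp
  also have "\<dots> = card (RR \<alpha> \<beta>)" by (rule card_image) (simp add: inj_on_def)
  finally show ?thesis using card_RR[of \<alpha> \<beta>] unfolding sl_num_eigenvalues_is_def eig_set by simp
qed

lemma eig_nth: "sl_eig f q w N (S_A \<alpha>) (S_B \<beta>) n = sorted_list_of_set (RR \<alpha> \<beta>) ! n"
proof -
  have S: "{x::real. sl_is_eigenvalue f q w N (S_A \<alpha>) (S_B \<beta>) (of_real x)} = RR \<alpha> \<beta>"
    by (auto simp: RR_def eigen_iff phic_poly poly_mp_of_real)
  have m: "sl_mult f q w N (S_A \<alpha>) (S_B \<beta>) (of_real x) = 1" if "x \<in> RR \<alpha> \<beta>" for x
    using that by (intro mult_one) (auto simp: RR_def phic_poly poly_mp_of_real)
  have mapeq: "map (\<lambda>x. replicate (sl_mult f q w N (S_A \<alpha>) (S_B \<beta>) (of_real x)) x) (sorted_list_of_set (RR \<alpha> \<beta>))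
      = map (\<lambda>x. [x]) (sorted_list_of_set (RR \<alpha> \<beta>))"
    using card_RR[of \<alpha> \<beta>] m by (intro map_cong) auto
  have cm: "concat (map (\<lambda>x. [x]) xs) = xs" for xs :: "real list" by (induction xs) auto
  show ?thesis unfolding sl_eig_def S mapeq cm ..
qed

end



lemma xi_props:
  fixes f0 :: real assumes f0: "f0 \<noteq> 0"
  shows "0 < xi_of f0 \<and> xi_of f0 < pi \<and> sin (xi_of f0) > 0 \<and> cos (xi_of f0) = - f0 * sin (xi_of f0)"
proof -
  define x where "x = - 1 / f0"
  define th where "th = arctan x"
  define s where "s = sqrt (1 + x\<^sup>2)"
  have s: "s > 0" unfolding s_def by (simp add: add_pos_nonneg)
  have sc: "sin th = x / s" "cos th = 1 / s" by (simp_all add: th_def s_def sin_arctan cos_arctan)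
  have b: "- (pi/2) < th" "th < pi/2" using arctan_bounded unfolding th_def by blast+
  have rel: "1 / s = - f0 * (x / s)" using f0 s by (simp add: x_def field_simps)
  show ?thesis
  proof (cases "f0 > 0")
    case True
    have xi: "xi_of f0 = th + pi" using True by (simp add: xi_of_def th_def x_def)
    have xn: "x < 0" using True by (simp add: x_def)
    then have "th < 0" by (simp add: th_def)
    have s1: "sin (xi_of f0) = - (x / s)" using sc(1) by (simp add: xi)
    have s2: "cos (xi_of f0) = - (1 / s)" using sc(2) by (simp add: xi)
    have p: "x / s < 0" using xn s by (simp add: divide_neg_pos)
    have "0 < xi_of f0" "xi_of f0 < pi" using b \<open>th < 0\<close> xi by linarith+
    moreover have "sin (xi_of f0) > 0" using s1 p by linarith
    moreover have "cos (xi_of f0) = - f0 * sin (xi_of f0)" using s1 s2 rel by simp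
    ultimately show ?thesis by blast
  next
    case False
    then have f0n: "f0 < 0" using f0 by simp
    have xi: "xi_of f0 = th" using False by (simp add: xi_of_def th_def x_def)
    have xp: "x > 0" using f0n by (simp add: x_def)
    then have "th > 0" by (simp add: th_def)
    have p: "x / s > 0" using xp s by simp
    have "0 < xi_of f0" "xi_of f0 < pi" using b \<open>th > 0\<close> xi by linarith+
    moreover have "sin (xi_of f0) > 0" using sc(1) p xi by simp
    moreover have "cos (xi_of f0) = - f0 * sin (xi_of f0)" using sc rel xi by simp
    ultimately show ?thesis by blast
  qed
qed

lemma pair_eq1:
  assumes I: "ilv G H T" and Tp: "\<And>x. T x x > 0"
    and cG: "card {x. poly G x = 0} = degree G" and cH: "card {x. poly H x = 0} = degree H"
    and dd: "degree G = degree H" and lc: "lead_coeff G * lead_coeff H > 0"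
    and i: "i < degree G"
  shows "sorted_list_of_set {x. poly H x = 0} ! i < sorted_list_of_set {x. poly G x = 0} ! i \<and>
         (i + 1 < degree G \<longrightarrow> sorted_list_of_set {x. poly G x = 0} ! i < sorted_list_of_set {x. poly H x = 0} ! (i + 1))"
proof -
  interpret ilv G H T by (rule I)
  define X where "X = {x. poly G x = 0}"
  define Y where "Y = {x. poly H x = 0}"
  have fX: "finite X" and fY: "finite Y" using poly_roots_finite Gnz Hnz by (auto simp: X_def Y_def)
  have disjXY: "X \<inter> Y = {}" using disj by (auto simp: X_def Y_def)
  have gX: "\<exists>y\<in>Y. a < y \<and> y < b" if "a \<in> X" "b \<in> X" "a < b" for a b
    using gapG[of a b] that by (auto simp: X_def Y_def)
  have gY: "\<exists>x\<in>X. a < x \<and> x < b" if "a \<in> Y" "b \<in> Y" "a < b" for a b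
    using gapH[of a b] that by (auto simp: X_def Y_def)
  have "card X > 0" using i cG by (simp add: X_def)
  then have Xne: "X \<noteq> {}" by auto
  define z where "z = Max (X \<union> Y)"
  have zin: "z \<in> X \<union> Y" unfolding z_def by (rule Max_in) (use Xne fX fY in auto)
  have above: "poly G x \<noteq> 0 \<and> poly H x \<noteq> 0" if "x > z" for x
  proof -
    have "x \<notin> X \<union> Y"
    proof
      assume "x \<in> X \<union> Y"
      then have "x \<le> z" unfolding z_def using fX fY by (intro Max_ge) auto
      then show False using that by simp
    qed
    then show ?thesis by (auto simp: X_def Y_def)
  qed
  have mr: "(poly G z = 0 \<longrightarrow> lead_coeff G * lead_coeff H > 0) \<and> (poly H z = 0 \<longrightarrow> lead_coeff G * lead_coeff H < 0)"
    by (rule max_root[OF Tp]) (use zin above in \<open>auto simp: X_def Y_def\<close>)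
  have "z \<notin> Y" using mr lc by (auto simp: Y_def)
  then have zX: "z \<in> X" using zin by auto
  have top: "\<exists>z\<in>X. \<forall>y\<in>Y. y < z"
  proof (intro bexI[OF _ zX] ballI)
    fix y assume "y \<in> Y"
    then have "y \<le> z" unfolding z_def using fX fY by (intro Max_ge) auto
    moreover have "y \<noteq> z" using \<open>y \<in> Y\<close> \<open>z \<notin> Y\<close> by auto
    ultimately show "y < z" by simp
  qed
  have cc: "card X = card Y" using cG cH dd by (simp add: X_def Y_def)
  show ?thesis using pattern_eq[OF fX fY disjXY gX gY top cc, of i] i cG
    unfolding X_def Y_def by simp
qed

lemma pair_eq2:
  assumes I: "ilv G H T" and Tp: "\<And>x. T x x > 0"
    and cG: "card {x. poly G x = 0} = degree G" and cH: "card {x. poly H x = 0} = degree H"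
    and dd: "degree G = degree H" and lc: "lead_coeff G * lead_coeff H < 0"
    and i: "i < degree G"
  shows "sorted_list_of_set {x. poly G x = 0} ! i < sorted_list_of_set {x. poly H x = 0} ! i \<and>
         (i + 1 < degree G \<longrightarrow> sorted_list_of_set {x. poly H x = 0} ! i < sorted_list_of_set {x. poly G x = 0} ! (i + 1))"
proof -
  have I2: "ilv H (- G) T" using I unfolding ilv_def by (auto simp: algebra_simps)
  have r: "{x. poly (- G) x = 0} = {x. poly G x = 0}" by auto
  have cmG: "card {x. poly (- G) x = 0} = degree (- G)" using cG r by simp
  have dd2: "degree H = degree (- G)" using dd by simp
  have lc2: "lead_coeff H * lead_coeff (- G) > 0" using lc by (simp add: lead_coeff_minus mult.commute)
  have i2: "i < degree H" using i dd by simp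
  note pe = pair_eq1[OF I2 Tp cH cmG dd2 lc2 i2]
  show ?thesis using pe unfolding r dd2[symmetric] dd[symmetric] by simp
qed

lemma pair_plus:
  assumes I: "ilv G H T"
    and cG: "card {x. poly G x = 0} = degree G" and cH: "card {x. poly H x = 0} = degree H"
    and dd: "degree G = degree H + 1"
    and i: "i < degree H"
  shows "sorted_list_of_set {x. poly G x = 0} ! i < sorted_list_of_set {x. poly H x = 0} ! i \<and>
         sorted_list_of_set {x. poly H x = 0} ! i < sorted_list_of_set {x. poly G x = 0} ! (i + 1)"
proof -
  interpret ilv G H T by (rule I)
  define X where "X = {x. poly G x = 0}"
  define Y where "Y = {x. poly H x = 0}"
  have fX: "finite X" and fY: "finite Y" using poly_roots_finite Gnz Hnz by (auto simp: X_def Y_def)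
  have disjXY: "X \<inter> Y = {}" using disj by (auto simp: X_def Y_def)
  have gX: "\<exists>y\<in>Y. a < y \<and> y < b" if "a \<in> X" "b \<in> X" "a < b" for a b
    using gapG[of a b] that by (auto simp: X_def Y_def)
  have gY: "\<exists>x\<in>X. a < x \<and> x < b" if "a \<in> Y" "b \<in> Y" "a < b" for a b
    using gapH[of a b] that by (auto simp: X_def Y_def)
  have cc: "card X = card Y + 1" using cG cH dd by (simp add: X_def Y_def)
  show ?thesis using pattern_plus[OF fX fY disjXY gX gY cc, of i] i cH
    unfolding X_def Y_def by simp
qed




context slp
begin

abbreviation "xi \<equiv> xi_of (f 0)"

lemma cc_xi:
  assumes "0 \<le> \<alpha>" "\<alpha> < pi"
  shows "(\<alpha> < xi \<longrightarrow> f 0 * cc \<alpha> > 0) \<and> (\<alpha> > xi \<longrightarrow> f 0 * cc \<alpha> < 0) \<and> (cc \<alpha> = 0 \<longleftrightarrow> \<alpha> = xi)"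
proof -
  have f0: "f 0 \<noteq> 0" using f_nz by auto
  have X: "0 < xi" "xi < pi" "sin xi > 0" "cos xi = - f 0 * sin xi" using xi_props[OF f0] by auto
  have e: "f 0 * cc \<alpha> = - sin (\<alpha> - xi) / sin xi"
    using f0 X(3) unfolding cc_def sin_diff X(4) by (simp add: field_simps)
  have lt: "sin (\<alpha> - xi) < 0" if "\<alpha> < xi"
  proof -
    have "sin (xi - \<alpha>) > 0" using that assms X by (intro sin_gt_zero) auto
    then show ?thesis by (metis minus_diff_eq neg_0_less_iff_less sin_minus)
  qed
  have gt: "sin (\<alpha> - xi) > 0" if "\<alpha> > xi" using that assms X by (intro sin_gt_zero) auto
  have z: "cc \<alpha> = 0 \<longleftrightarrow> \<alpha> = xi"
  proof
    assume "cc \<alpha> = 0"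
    then have "sin (\<alpha> - xi) = 0" using e X(3) by simp
    then show "\<alpha> = xi" using lt gt by (cases "\<alpha> < xi"; cases "\<alpha> > xi") auto
  next
    assume "\<alpha> = xi" then show "cc \<alpha> = 0" using e f0 X(3) by simp
  qed
  show ?thesis using e lt gt z X(3) by (auto simp: divide_pos_pos divide_neg_pos)
qed

abbreviation "rr \<alpha> \<beta> \<equiv> sorted_list_of_set (RR \<alpha> \<beta>)"

lemma cRR: "card {x. poly (phiP \<alpha> \<beta>) x = 0} = degree (phiP \<alpha> \<beta>)"
  using card_RR by (simp add: RR_def)

lemma lcU_nz: "lead_coeff (PhU \<beta>) \<noteq> 0"
  using PhU_deg by (metis leading_coeff_0_iff)

lemma lc_U: "cc \<alpha> \<noteq> 0 \<Longrightarrow> lead_coeff (phiP \<alpha> \<beta>) = cc \<alpha> * lead_coeff (PhU \<beta>)"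
proof -
  assume a: "cc \<alpha> \<noteq> 0"
  have "lead_coeff (phiP \<alpha> \<beta>) = (if cc \<alpha> \<noteq> 0 then cc \<alpha> * lead_coeff (PhU \<beta>) else cos \<alpha> * lead_coeff (PhV \<beta>))"
    using phiP_deg[of \<alpha> \<beta>] by blast
  then show ?thesis by (simp only: a if_True not_False_eq_True)
qed

lemma lc_V: "cc \<alpha> = 0 \<Longrightarrow> lead_coeff (phiP \<alpha> \<beta>) = cos \<alpha> * lead_coeff (PhV \<beta>)"
proof -
  assume a: "cc \<alpha> = 0"
  have "lead_coeff (phiP \<alpha> \<beta>) = (if cc \<alpha> \<noteq> 0 then cc \<alpha> * lead_coeff (PhU \<beta>) else cos \<alpha> * lead_coeff (PhV \<beta>))"
    using phiP_deg[of \<alpha> \<beta>] by blast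
  then show ?thesis using a by simp
qed

lemma lcPhU: "sin \<beta> \<noteq> 0 \<Longrightarrow> lead_coeff (PhU \<beta>) = - sin \<beta> * lead_coeff (PQ 1 0 N)"
proof -
  assume a: "sin \<beta> \<noteq> 0"
  have "lead_coeff (PhU \<beta>) = (if sin \<beta> = 0 then cos \<beta> * lead_coeff (PY 1 0 N) else - sin \<beta> * lead_coeff (PQ 1 0 N))"
    using PhU_deg[of \<beta>] by blast
  then show ?thesis using a by (simp only: if_False a)
qed

lemma lcPhV: "sin \<beta> \<noteq> 0 \<Longrightarrow> lead_coeff (PhV \<beta>) = - sin \<beta> * lead_coeff (PQ (- 1 / f 0) 1 N)"
proof -
  assume a: "sin \<beta> \<noteq> 0"
  have "lead_coeff (PhV \<beta>) = (if sin \<beta> = 0 then cos \<beta> * lead_coeff (PY (- 1 / f 0) 1 N) else - sin \<beta> * lead_coeff (PQ (- 1 / f 0) 1 N))"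
    using PhV_deg[of \<beta>] by blast
  then show ?thesis using a by (simp only: if_False a)
qed

lemma lc_alpha:
  assumes "cc \<alpha> \<noteq> 0" "cc \<alpha>' \<noteq> 0"
  shows "lead_coeff (phiP \<alpha> \<beta>) * lead_coeff (phiP \<alpha>' \<beta>) = (cc \<alpha> * cc \<alpha>') * (lead_coeff (PhU \<beta>))\<^sup>2"
  unfolding lc_U[OF assms(1)] lc_U[OF assms(2)] by (simp add: power2_eq_square mult_ac)

lemma alpha_pair_same:
  assumes "cc \<alpha> * cc \<alpha>' > 0" "0 < \<alpha>' - \<alpha>" "\<alpha>' - \<alpha> < pi" "i < degree (phiP \<alpha> \<beta>)"
  shows "rr \<alpha>' \<beta> ! i < rr \<alpha> \<beta> ! i \<and> (i + 1 < degree (phiP \<alpha> \<beta>) \<longrightarrow> rr \<alpha> \<beta> ! i < rr \<alpha>' \<beta> ! (i + 1))"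
proof -
  have s: "sin (\<alpha>' - \<alpha>) > 0" using assms by (intro sin_gt_zero) auto
  have c: "cc \<alpha> \<noteq> 0" "cc \<alpha>' \<noteq> 0" using assms(1) by auto
  have lc: "lead_coeff (phiP \<alpha> \<beta>) * lead_coeff (phiP \<alpha>' \<beta>) > 0"
    unfolding lc_alpha[OF c] using assms(1) lcU_nz[of \<beta>] by (simp add: mult_pos_pos)
  have dd: "degree (phiP \<alpha> \<beta>) = degree (phiP \<alpha>' \<beta>)" using phiP_deg c by simp
  show ?thesis
    using pair_eq1[OF ilv_alpha[of \<alpha>' \<alpha> \<beta>] _ cRR cRR dd lc assms(4)] s Sa_pos
    by (simp add: RR_def mult_pos_pos)
qed

lemma alpha_pair_opp:
  assumes "cc \<alpha> * cc \<alpha>' < 0" "0 < \<alpha>' - \<alpha>" "\<alpha>' - \<alpha> < pi" "i < degree (phiP \<alpha> \<beta>)"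
  shows "rr \<alpha> \<beta> ! i < rr \<alpha>' \<beta> ! i \<and> (i + 1 < degree (phiP \<alpha> \<beta>) \<longrightarrow> rr \<alpha>' \<beta> ! i < rr \<alpha> \<beta> ! (i + 1))"
proof -
  have s: "sin (\<alpha>' - \<alpha>) > 0" using assms by (intro sin_gt_zero) auto
  have c: "cc \<alpha> \<noteq> 0" "cc \<alpha>' \<noteq> 0" using assms(1) by auto
  have lc: "lead_coeff (phiP \<alpha> \<beta>) * lead_coeff (phiP \<alpha>' \<beta>) < 0"
    unfolding lc_alpha[OF c] using assms(1) lcU_nz[of \<beta>] by (simp add: mult_neg_pos)
  have dd: "degree (phiP \<alpha> \<beta>) = degree (phiP \<alpha>' \<beta>)" using phiP_deg c by simp
  show ?thesis
    using pair_eq2[OF ilv_alpha[of \<alpha>' \<alpha> \<beta>] _ cRR cRR dd lc assms(4)] s Sa_pos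
    by (simp add: RR_def mult_pos_pos)
qed

lemma alpha_pair_xi:
  assumes "cc \<alpha> \<noteq> 0" "cc \<alpha>' = 0" "sin (\<alpha>' - \<alpha>) \<noteq> 0" "i + 1 < degree (phiP \<alpha> \<beta>)"
  shows "rr \<alpha> \<beta> ! i < rr \<alpha>' \<beta> ! i \<and> rr \<alpha>' \<beta> ! i < rr \<alpha> \<beta> ! (i + 1)"
proof -
  have dd: "degree (phiP \<alpha> \<beta>) = degree (phiP \<alpha>' \<beta>) + 1" using phiP_deg[of \<alpha> \<beta>] phiP_deg[of \<alpha>' \<beta>] assms N2
    by (auto split: if_splits)
  show ?thesis using pair_plus[OF ilv_alpha[OF assms(3)] cRR cRR dd, of i] assms(4) dd
    by (simp add: RR_def)
qed

end



context slp
begin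

lemma sq_sign: "0 < (a * u) * (a * v) \<Longrightarrow> 0 < u * (v::real)"
proof (rule ccontr)
  assume h: "0 < (a * u) * (a * v)" "\<not> 0 < u * v"
  then have "u * v \<le> 0" by simp
  then have "(a * a) * (u * v) \<le> 0" by (rule mult_nonneg_nonpos[OF zero_le_square])
  then show False using h(1) by (simp add: mult_ac)
qed

lemma sq_sign2: "(a * u) * (a * v) < 0 \<Longrightarrow> u * (v::real) < 0"
proof (rule ccontr)
  assume h: "(a * u) * (a * v) < 0" "\<not> u * v < 0"
  then have "u * v \<ge> 0" by simp
  then have "(a * a) * (u * v) \<ge> 0" by (rule mult_nonneg_nonneg[OF zero_le_square])
  then show False using h(1) by (simp add: mult_ac)
qed

lemma alpha_chain:
  assumes a: "0 \<le> \<alpha>1" "\<alpha>1 < \<alpha>2" "\<alpha>2 < xi" "xi \<le> \<alpha>3" "\<alpha>3 < \<alpha>4" "\<alpha>4 < pi"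
    and D: "D = degree (phiP \<alpha>1 \<beta>)"
  shows "(\<forall>n. n + 1 < D \<longrightarrow> rr \<alpha>2 \<beta> ! n < rr \<alpha>1 \<beta> ! n \<and> rr \<alpha>1 \<beta> ! n < rr \<alpha>4 \<beta> ! n \<and>
            rr \<alpha>4 \<beta> ! n < rr \<alpha>3 \<beta> ! n \<and> rr \<alpha>3 \<beta> ! n < rr \<alpha>2 \<beta> ! (n + 1)) \<and>
         rr \<alpha>2 \<beta> ! (D - 1) < rr \<alpha>1 \<beta> ! (D - 1) \<and> rr \<alpha>1 \<beta> ! (D - 1) < rr \<alpha>4 \<beta> ! (D - 1) \<and>
         (\<alpha>3 \<noteq> xi \<longrightarrow> rr \<alpha>4 \<beta> ! (D - 1) < rr \<alpha>3 \<beta> ! (D - 1))"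
proof -
  have f0: "f 0 \<noteq> 0" using f_nz by auto
  have xp: "0 < xi" "xi < pi" using xi_props[OF f0] by auto
  have c1: "f 0 * cc \<alpha>1 > 0" and c2: "f 0 * cc \<alpha>2 > 0" and c4: "f 0 * cc \<alpha>4 < 0"
    using cc_xi[of \<alpha>1] cc_xi[of \<alpha>2] cc_xi[of \<alpha>4] a xp by auto
  have sgn: "cc u * cc v > 0" if "f 0 * cc u > 0" "f 0 * cc v > 0" for u v
  proof -
    have "(f 0 * cc u) * (f 0 * cc v) > 0" using that by (simp add: mult_pos_pos)
    then show ?thesis by (rule sq_sign)
  qed
  have sgn2: "cc u * cc v > 0" if "f 0 * cc u < 0" "f 0 * cc v < 0" for u v
  proof -
    have "(f 0 * cc u) * (f 0 * cc v) > 0" using that by (simp add: mult_neg_neg)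
    then show ?thesis by (rule sq_sign)
  qed
  have sgn3: "cc u * cc v < 0" if "f 0 * cc u > 0" "f 0 * cc v < 0" for u v
  proof -
    have "(f 0 * cc u) * (f 0 * cc v) < 0" using that by (simp add: mult_pos_neg)
    then show ?thesis by (rule sq_sign2)
  qed
  have cz: "cc \<alpha>1 \<noteq> 0" "cc \<alpha>2 \<noteq> 0" "cc \<alpha>4 \<noteq> 0" using c1 c2 c4 by auto
  have dd: "degree (phiP \<alpha>2 \<beta>) = D" "degree (phiP \<alpha>4 \<beta>) = D" using phiP_deg cz D by simp_all
  have D1: "D \<ge> 1" using D phiP_deg[of \<alpha>1 \<beta>] cz N2 by auto
  have A: "rr \<alpha>2 \<beta> ! i < rr \<alpha>1 \<beta> ! i" if "i < D" for i
    using alpha_pair_same[of \<alpha>1 \<alpha>2 i \<beta>] sgn[OF c1 c2] a xp that D by auto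
  have B: "rr \<alpha>1 \<beta> ! i < rr \<alpha>4 \<beta> ! i" if "i < D" for i
    using alpha_pair_opp[of \<alpha>1 \<alpha>4 i \<beta>] sgn3[OF c1 c4] a xp that D by auto
  have C: "rr \<alpha>4 \<beta> ! i < rr \<alpha>3 \<beta> ! i" if "i + 1 < D \<or> (i < D \<and> \<alpha>3 \<noteq> xi)" for i
  proof (cases "\<alpha>3 = xi")
    case True
    then have "cc \<alpha>3 = 0" using cc_xi[of \<alpha>3] a xp by auto
    moreover have "sin (\<alpha>3 - \<alpha>4) \<noteq> 0"
    proof -
      have "sin (\<alpha>4 - \<alpha>3) > 0" using a xp by (intro sin_gt_zero) auto
      then show ?thesis by (metis less_irrefl minus_diff_eq neg_0_equal_iff_equal sin_minus)
    qed
    ultimately show ?thesis using alpha_pair_xi[of \<alpha>4 \<alpha>3 i \<beta>] cz that True dd by auto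
  next
    case False
    then have c3: "f 0 * cc \<alpha>3 < 0" using cc_xi[of \<alpha>3] a xp by auto
    have "degree (phiP \<alpha>3 \<beta>) = D" using phiP_deg c3 D cz by (auto split: if_splits)
    then show ?thesis using alpha_pair_same[of \<alpha>3 \<alpha>4 i \<beta>] sgn2[OF c3 c4] a xp that by auto
  qed
  have E: "rr \<alpha>3 \<beta> ! i < rr \<alpha>2 \<beta> ! (i + 1)" if "i + 1 < D" for i
  proof (cases "\<alpha>3 = xi")
    case True
    then have "cc \<alpha>3 = 0" using cc_xi[of \<alpha>3] a xp by auto
    moreover have "sin (\<alpha>3 - \<alpha>2) \<noteq> 0"
    proof -
      have "sin (\<alpha>3 - \<alpha>2) > 0" using a xp by (intro sin_gt_zero) auto
      then show ?thesis by simp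
    qed
    ultimately show ?thesis using alpha_pair_xi[of \<alpha>2 \<alpha>3 i \<beta>] cz that True dd by auto
  next
    case False
    then have c3: "f 0 * cc \<alpha>3 < 0" using cc_xi[of \<alpha>3] a xp by auto
    show ?thesis using alpha_pair_opp[of \<alpha>2 \<alpha>3 i \<beta>] sgn3[OF c2 c3] a xp that dd by auto
  qed
  show ?thesis using A B C E D1 by auto
qed

definition KK :: "real \<Rightarrow> real" where
  "KK \<alpha> = (if cc \<alpha> \<noteq> 0 then cc \<alpha> * lead_coeff (PQ 1 0 N) else cos \<alpha> * lead_coeff (PQ (- 1 / f 0) 1 N))"

lemma lc_KK: "sin \<beta> \<noteq> 0 \<Longrightarrow> lead_coeff (phiP \<alpha> \<beta>) = - sin \<beta> * KK \<alpha>"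
proof (cases "cc \<alpha> = 0")
  case True
  assume s: "sin \<beta> \<noteq> 0"
  show ?thesis unfolding lc_V[OF True] lcPhV[OF s] KK_def using True by simp
next
  case False
  assume s: "sin \<beta> \<noteq> 0"
  show ?thesis unfolding lc_U[OF False] lcPhU[OF s] KK_def using False by simp
qed

lemma lc_beta:
  assumes "sin \<beta> \<noteq> 0" "sin \<beta>' \<noteq> 0"
  shows "lead_coeff (phiP \<alpha> \<beta>) * lead_coeff (phiP \<alpha> \<beta>') > 0 \<longleftrightarrow> sin \<beta> * sin \<beta>' > 0"
proof -
  have "lead_coeff (phiP \<alpha> \<beta>) \<noteq> 0" using phiP_deg by (metis leading_coeff_0_iff)
  then have K: "KK \<alpha> \<noteq> 0" using lc_KK[OF assms(1)] by auto
  have "lead_coeff (phiP \<alpha> \<beta>) * lead_coeff (phiP \<alpha> \<beta>') = (sin \<beta> * sin \<beta>') * (KK \<alpha> * KK \<alpha>)"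
    unfolding lc_KK[OF assms(1)] lc_KK[OF assms(2)] by (simp add: mult_ac)
  moreover have "KK \<alpha> * KK \<alpha> > 0" using K not_real_square_gt_zero by blast
  ultimately show ?thesis by (simp add: zero_less_mult_iff)
qed

lemma beta_chain:
  assumes b: "0 < \<beta>1" "\<beta>1 < \<beta>2" "\<beta>2 \<le> pi" and D: "D = degree (phiP \<alpha> \<beta>1)"
  shows "(\<forall>n. n + 1 < D \<longrightarrow> rr \<alpha> \<beta>1 ! n < rr \<alpha> \<beta>2 ! n \<and> rr \<alpha> \<beta>2 ! n < rr \<alpha> \<beta>1 ! (n + 1)) \<and>
         (\<beta>2 \<noteq> pi \<longrightarrow> rr \<alpha> \<beta>1 ! (D - 1) < rr \<alpha> \<beta>2 ! (D - 1))"
proof -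
  have s1: "sin \<beta>1 > 0" using b by (intro sin_gt_zero) auto
  have D1: "D \<ge> 1" using D phiP_deg[of \<alpha> \<beta>1] s1 N2 by (auto split: if_splits)
  show ?thesis
  proof (cases "\<beta>2 = pi")
    case True
    have sd: "sin (\<beta>1 - \<beta>2) \<noteq> 0" using True s1 by simp
    have dd: "degree (phiP \<alpha> \<beta>1) = degree (phiP \<alpha> \<beta>2) + 1"
      using phiP_deg[of \<alpha> \<beta>1] phiP_deg[of \<alpha> \<beta>2] True s1 N2 by (auto split: if_splits)
    show ?thesis using pair_plus[OF ilv_beta[OF sd] cRR cRR dd] True dd D by (auto simp: RR_def)
  next
    case False
    then have s2: "sin \<beta>2 > 0" using b by (intro sin_gt_zero) auto
    have sd: "sin (\<beta>2 - \<beta>1) > 0" using b by (intro sin_gt_zero) auto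
    have dd: "degree (phiP \<alpha> \<beta>2) = degree (phiP \<alpha> \<beta>1)"
      using phiP_deg[of \<alpha> \<beta>1] phiP_deg[of \<alpha> \<beta>2] s1 s2 by auto
    have lc: "lead_coeff (phiP \<alpha> \<beta>2) * lead_coeff (phiP \<alpha> \<beta>1) > 0"
      using lc_beta[of \<beta>2 \<beta>1 \<alpha>] s1 s2 by (simp add: mult_pos_pos)
    have "rr \<alpha> \<beta>1 ! i < rr \<alpha> \<beta>2 ! i \<and> (i + 1 < D \<longrightarrow> rr \<alpha> \<beta>2 ! i < rr \<alpha> \<beta>1 ! (i + 1))" if "i < D" for i
      using pair_eq1[OF ilv_beta[of \<beta>2 \<beta>1 \<alpha>] _ cRR cRR dd lc, of i] sd Sb_pos that D dd
      by (simp add: RR_def mult_pos_pos)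
    then show ?thesis using D1 False by auto
  qed
qed

end



context slp
begin

lemma deg_formula:
  assumes "0 \<le> \<alpha>" "\<alpha> < pi" "0 < \<beta>" "\<beta> \<le> pi"
  shows "degree (phiP \<alpha> \<beta>) = (if \<alpha> \<noteq> xi \<and> \<beta> \<noteq> pi then N else if \<alpha> = xi \<and> \<beta> = pi then N - 2 else N - 1)"
proof -
  have d: "degree (phiP \<alpha> \<beta>) = (if cc \<alpha> \<noteq> 0 then (if sin \<beta> = 0 then N - 1 else N) else (if sin \<beta> = 0 then N - 2 else N - 1))"
    using phiP_deg[of \<alpha> \<beta>] by blast
  have c: "cc \<alpha> = 0 \<longleftrightarrow> \<alpha> = xi" using cc_xi assms by blast
  have s: "sin \<beta> = 0 \<longleftrightarrow> \<beta> = pi"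
  proof
    assume h: "sin \<beta> = 0"
    show "\<beta> = pi"
    proof (rule ccontr)
      assume "\<beta> \<noteq> pi" then have "sin \<beta> > 0" using assms by (intro sin_gt_zero) auto
      then show False using h by simp
    qed
  qed simp
  show ?thesis unfolding d c s by auto
qed

end

theorem theorem3p1:
  fixes f q w :: "nat \<Rightarrow> real" and N :: nat
  assumes N2: "N \<ge> 2"
    and f_nz: "\<And>n. n \<le> N \<Longrightarrow> f n \<noteq> 0"
    and w_pos: "\<And>n. 1 \<le> n \<Longrightarrow> n \<le> N \<Longrightarrow> w n > 0"
  defines "\<xi> \<equiv> xi_of (f 0)"
    and "L \<equiv> (\<lambda>\<alpha> \<beta> n. sl_eig f q w N (S_A \<alpha>) (S_B \<beta>) n)"
  shows
    "(\<forall>\<alpha> \<beta>. 0 \<le> \<alpha> \<and> \<alpha> < pi \<and> 0 < \<beta> \<and> \<beta> \<le> pi \<longrightarrow>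
        sl_num_eigenvalues_is f q w N (S_A \<alpha>) (S_B \<beta>)
          (if \<alpha> \<noteq> \<xi> \<and> \<beta> \<noteq> pi then N
           else if \<alpha> = \<xi> \<and> \<beta> = pi then N - 2 else N - 1))
   \<and> (\<forall>\<alpha>1 \<alpha>2 \<alpha>3 \<alpha>4 \<beta>1 \<beta>2.
        0 \<le> \<alpha>1 \<and> \<alpha>1 < \<alpha>2 \<and> \<alpha>2 < \<xi> \<and> \<xi> \<le> \<alpha>3 \<and> \<alpha>3 < \<alpha>4 \<and> \<alpha>4 < pi \<and>
        0 < \<beta>1 \<and> \<beta>1 < \<beta>2 \<and> \<beta>2 \<le> pi \<longrightarrow>
        (\<forall>\<beta>0. 0 < \<beta>0 \<and> \<beta>0 < pi \<longrightarrow>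
           (\<forall>n. n + 2 \<le> N \<longrightarrow>
              L \<alpha>2 \<beta>0 n < L \<alpha>1 \<beta>0 n \<and> L \<alpha>1 \<beta>0 n < L \<alpha>4 \<beta>0 n \<and>
              L \<alpha>4 \<beta>0 n < L \<alpha>3 \<beta>0 n \<and> L \<alpha>3 \<beta>0 n < L \<alpha>2 \<beta>0 (n + 1)) \<and>
           L \<alpha>2 \<beta>0 (N - 1) < L \<alpha>1 \<beta>0 (N - 1) \<and> L \<alpha>1 \<beta>0 (N - 1) < L \<alpha>4 \<beta>0 (N - 1) \<and>
           (\<alpha>3 \<noteq> \<xi> \<longrightarrow> L \<alpha>4 \<beta>0 (N - 1) < L \<alpha>3 \<beta>0 (N - 1))) \<and>
        ((\<forall>n. n + 3 \<le> N \<longrightarrow>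
              L \<alpha>2 pi n < L \<alpha>1 pi n \<and> L \<alpha>1 pi n < L \<alpha>4 pi n \<and>
              L \<alpha>4 pi n < L \<alpha>3 pi n \<and> L \<alpha>3 pi n < L \<alpha>2 pi (n + 1)) \<and>
           L \<alpha>2 pi (N - 2) < L \<alpha>1 pi (N - 2) \<and> L \<alpha>1 pi (N - 2) < L \<alpha>4 pi (N - 2) \<and>
           (\<alpha>3 \<noteq> \<xi> \<longrightarrow> L \<alpha>4 pi (N - 2) < L \<alpha>3 pi (N - 2))) \<and>
        (\<forall>\<alpha>0. 0 \<le> \<alpha>0 \<and> \<alpha>0 < pi \<and> \<alpha>0 \<noteq> \<xi> \<longrightarrow>
           (\<forall>n. n + 2 \<le> N \<longrightarrow>
              L \<alpha>0 \<beta>1 n < L \<alpha>0 \<beta>2 n \<and> L \<alpha>0 \<beta>2 n < L \<alpha>0 \<beta>1 (n + 1)) \<and>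
           (\<beta>2 \<noteq> pi \<longrightarrow> L \<alpha>0 \<beta>1 (N - 1) < L \<alpha>0 \<beta>2 (N - 1))) \<and>
        ((\<forall>n. n + 3 \<le> N \<longrightarrow>
              L \<xi> \<beta>1 n < L \<xi> \<beta>2 n \<and> L \<xi> \<beta>2 n < L \<xi> \<beta>1 (n + 1)) \<and>
           (\<beta>2 \<noteq> pi \<longrightarrow> L \<xi> \<beta>1 (N - 2) < L \<xi> \<beta>2 (N - 2))))"
proof -
  interpret S: slp f q w N by unfold_locales (use N2 f_nz w_pos in auto)
  have xidef: "\<xi> = xi_of (f 0)" using assms(4) by simp
  have Ldef: "L \<alpha> \<beta> n = sorted_list_of_set (S.RR \<alpha> \<beta>) ! n" for \<alpha> \<beta> n
    using assms(5) by (simp add: S.eig_nth)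
  have f0: "f 0 \<noteq> 0" using f_nz by auto
  have xp: "0 < \<xi>" "\<xi> < pi" using xi_props[OF f0] xidef by auto
  have part1: "\<forall>\<alpha> \<beta>. 0 \<le> \<alpha> \<and> \<alpha> < pi \<and> 0 < \<beta> \<and> \<beta> \<le> pi \<longrightarrow>
        sl_num_eigenvalues_is f q w N (S_A \<alpha>) (S_B \<beta>)
          (if \<alpha> \<noteq> \<xi> \<and> \<beta> \<noteq> pi then N
           else if \<alpha> = \<xi> \<and> \<beta> = pi then N - 2 else N - 1)"
  proof (intro allI impI)
    fix \<alpha> \<beta> assume h: "0 \<le> \<alpha> \<and> \<alpha> < pi \<and> 0 < \<beta> \<and> \<beta> \<le> pi"
    have "degree (S.phiP \<alpha> \<beta>) = (if \<alpha> \<noteq> \<xi> \<and> \<beta> \<noteq> pi then N else if \<alpha> = \<xi> \<and> \<beta> = pi then N - 2 else N - 1)"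
      using S.deg_formula[of \<alpha> \<beta>] h xidef by simp
    then show "sl_num_eigenvalues_is f q w N (S_A \<alpha>) (S_B \<beta>)
          (if \<alpha> \<noteq> \<xi> \<and> \<beta> \<noteq> pi then N
           else if \<alpha> = \<xi> \<and> \<beta> = pi then N - 2 else N - 1)"
      using S.num_eig[of \<alpha> \<beta>] by simp
  qed
  have part2: "(\<forall>\<beta>0. 0 < \<beta>0 \<and> \<beta>0 < pi \<longrightarrow>
           (\<forall>n. n + 2 \<le> N \<longrightarrow>
              L \<alpha>2 \<beta>0 n < L \<alpha>1 \<beta>0 n \<and> L \<alpha>1 \<beta>0 n < L \<alpha>4 \<beta>0 n \<and>
              L \<alpha>4 \<beta>0 n < L \<alpha>3 \<beta>0 n \<and> L \<alpha>3 \<beta>0 n < L \<alpha>2 \<beta>0 (n + 1)) \<and>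
           L \<alpha>2 \<beta>0 (N - 1) < L \<alpha>1 \<beta>0 (N - 1) \<and> L \<alpha>1 \<beta>0 (N - 1) < L \<alpha>4 \<beta>0 (N - 1) \<and>
           (\<alpha>3 \<noteq> \<xi> \<longrightarrow> L \<alpha>4 \<beta>0 (N - 1) < L \<alpha>3 \<beta>0 (N - 1))) \<and>
        ((\<forall>n. n + 3 \<le> N \<longrightarrow>
              L \<alpha>2 pi n < L \<alpha>1 pi n \<and> L \<alpha>1 pi n < L \<alpha>4 pi n \<and>
              L \<alpha>4 pi n < L \<alpha>3 pi n \<and> L \<alpha>3 pi n < L \<alpha>2 pi (n + 1)) \<and>
           L \<alpha>2 pi (N - 2) < L \<alpha>1 pi (N - 2) \<and> L \<alpha>1 pi (N - 2) < L \<alpha>4 pi (N - 2) \<and>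
           (\<alpha>3 \<noteq> \<xi> \<longrightarrow> L \<alpha>4 pi (N - 2) < L \<alpha>3 pi (N - 2))) \<and>
        (\<forall>\<alpha>0. 0 \<le> \<alpha>0 \<and> \<alpha>0 < pi \<and> \<alpha>0 \<noteq> \<xi> \<longrightarrow>
           (\<forall>n. n + 2 \<le> N \<longrightarrow>
              L \<alpha>0 \<beta>1 n < L \<alpha>0 \<beta>2 n \<and> L \<alpha>0 \<beta>2 n < L \<alpha>0 \<beta>1 (n + 1)) \<and>
           (\<beta>2 \<noteq> pi \<longrightarrow> L \<alpha>0 \<beta>1 (N - 1) < L \<alpha>0 \<beta>2 (N - 1))) \<and>
        ((\<forall>n. n + 3 \<le> N \<longrightarrow>
              L \<xi> \<beta>1 n < L \<xi> \<beta>2 n \<and> L \<xi> \<beta>2 n < L \<xi> \<beta>1 (n + 1)) \<and>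
           (\<beta>2 \<noteq> pi \<longrightarrow> L \<xi> \<beta>1 (N - 2) < L \<xi> \<beta>2 (N - 2)))"
    if a: "0 \<le> \<alpha>1" "\<alpha>1 < \<alpha>2" "\<alpha>2 < \<xi>" "\<xi> \<le> \<alpha>3" "\<alpha>3 < \<alpha>4" "\<alpha>4 < pi"
      and b: "0 < \<beta>1" "\<beta>1 < \<beta>2" "\<beta>2 \<le> pi" for \<alpha>1 \<alpha>2 \<alpha>3 \<alpha>4 \<beta>1 \<beta>2
  proof -
    have a': "0 \<le> \<alpha>1" "\<alpha>1 < \<alpha>2" "\<alpha>2 < S.xi" "S.xi \<le> \<alpha>3" "\<alpha>3 < \<alpha>4" "\<alpha>4 < pi"
      using a xidef by auto
    have P1: "(\<forall>n. n + 2 \<le> N \<longrightarrow>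
              L \<alpha>2 \<beta>0 n < L \<alpha>1 \<beta>0 n \<and> L \<alpha>1 \<beta>0 n < L \<alpha>4 \<beta>0 n \<and>
              L \<alpha>4 \<beta>0 n < L \<alpha>3 \<beta>0 n \<and> L \<alpha>3 \<beta>0 n < L \<alpha>2 \<beta>0 (n + 1)) \<and>
           L \<alpha>2 \<beta>0 (N - 1) < L \<alpha>1 \<beta>0 (N - 1) \<and> L \<alpha>1 \<beta>0 (N - 1) < L \<alpha>4 \<beta>0 (N - 1) \<and>
           (\<alpha>3 \<noteq> \<xi> \<longrightarrow> L \<alpha>4 \<beta>0 (N - 1) < L \<alpha>3 \<beta>0 (N - 1))"
      if "0 < \<beta>0" "\<beta>0 < pi" for \<beta>0
    proof -
      have D: "N = degree (S.phiP \<alpha>1 \<beta>0)" using S.deg_formula[of \<alpha>1 \<beta>0] that a xp xidef by auto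
      have e: "n + 2 \<le> N \<longleftrightarrow> n + 1 < N" for n by auto
      show ?thesis using S.alpha_chain[OF a' D] xidef unfolding Ldef e by simp
    qed
    have P2: "(\<forall>n. n + 3 \<le> N \<longrightarrow>
              L \<alpha>2 pi n < L \<alpha>1 pi n \<and> L \<alpha>1 pi n < L \<alpha>4 pi n \<and>
              L \<alpha>4 pi n < L \<alpha>3 pi n \<and> L \<alpha>3 pi n < L \<alpha>2 pi (n + 1)) \<and>
           L \<alpha>2 pi (N - 2) < L \<alpha>1 pi (N - 2) \<and> L \<alpha>1 pi (N - 2) < L \<alpha>4 pi (N - 2) \<and>
           (\<alpha>3 \<noteq> \<xi> \<longrightarrow> L \<alpha>4 pi (N - 2) < L \<alpha>3 pi (N - 2))"
    proof -
      have D: "N - 1 = degree (S.phiP \<alpha>1 pi)" using S.deg_formula[of \<alpha>1 pi] a xp xidef by auto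
      have e: "n + 3 \<le> N \<longleftrightarrow> n + 1 < N - 1" for n by auto
      have e2: "N - 2 = N - 1 - 1" by simp
      show ?thesis using S.alpha_chain[OF a' D] xidef unfolding Ldef e e2 by simp
    qed
    have P3: "(\<forall>n. n + 2 \<le> N \<longrightarrow>
              L \<alpha>0 \<beta>1 n < L \<alpha>0 \<beta>2 n \<and> L \<alpha>0 \<beta>2 n < L \<alpha>0 \<beta>1 (n + 1)) \<and>
           (\<beta>2 \<noteq> pi \<longrightarrow> L \<alpha>0 \<beta>1 (N - 1) < L \<alpha>0 \<beta>2 (N - 1))"
      if "0 \<le> \<alpha>0" "\<alpha>0 < pi" "\<alpha>0 \<noteq> \<xi>" for \<alpha>0
    proof -
      have D: "N = degree (S.phiP \<alpha>0 \<beta>1)" using S.deg_formula[of \<alpha>0 \<beta>1] that b xidef by auto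
      have e: "n + 2 \<le> N \<longleftrightarrow> n + 1 < N" for n by auto
      show ?thesis using S.beta_chain[OF b D] unfolding Ldef e by simp
    qed
    have P4: "(\<forall>n. n + 3 \<le> N \<longrightarrow>
              L \<xi> \<beta>1 n < L \<xi> \<beta>2 n \<and> L \<xi> \<beta>2 n < L \<xi> \<beta>1 (n + 1)) \<and>
           (\<beta>2 \<noteq> pi \<longrightarrow> L \<xi> \<beta>1 (N - 2) < L \<xi> \<beta>2 (N - 2))"
    proof -
      have "degree (S.phiP \<xi> \<beta>1) = N - 1"
        using S.deg_formula[of \<xi> \<beta>1] b xp unfolding xidef[symmetric] by simp
      then have D: "N - 1 = degree (S.phiP \<xi> \<beta>1)" by simp
      have e: "n + 3 \<le> N \<longleftrightarrow> n + 1 < N - 1" for n by auto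
      have e2: "N - 2 = N - 1 - 1" by simp
      show ?thesis using S.beta_chain[OF b D] unfolding Ldef e e2 by simp
    qed
    show ?thesis using P1 P2 P3 P4 by blast
  qed
  show ?thesis using part1 part2 by blast
qed


end
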